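(* Let $k\ge1$ and $A,B\in SL(k,\mathbb Z)$, and assume that $1$ is an eigenvalue neither of $A$ nor of $B$. If $\pi_1(\mathcal T_A)\cong\pi_1(\mathcal T_B)$ and $A$ is diagonalizable (over $\mathbb C$), then $B$ is also diagonalizable.
   Context: For $A\in SL(k,\mathbb Z)$, let $\phi_A:\mathbb T^k\to\mathbb T^k$ be the homeomorphism of $\mathbb T^k=\mathbb R^k/\mathbb Z^k$ induced by $A$, and let $\mathcal T_A$ be the mapping torus of $\phi_A$, i.e. $\mathbb T^k\times[0,1]/((x,1)\sim(\phi_A(x),0))$. *)

theory Defs
  imports "HOL-Analysis.Analysis" "HOL-Algebra.Group"
begin

definition quotient_topology :: "'a topology \<Rightarrow> ('a \<Rightarrow> 'b) \<Rightarrow> 'b topology" where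
  "quotient_topology X f =
     topology (\<lambda>U. U \<subseteq> f ` topspace X \<and> openin X {x \<in> topspace X. f x \<in> U})"

definition loops_at :: "'a topology \<Rightarrow> 'a \<Rightarrow> (real \<Rightarrow> 'a) set" where
  "loops_at X x0 = {p. pathin X p \<and> p 0 = x0 \<and> p 1 = x0}"

definition loop_homotopic :: "'a topology \<Rightarrow> 'a \<Rightarrow> (real \<Rightarrow> 'a) \<Rightarrow> (real \<Rightarrow> 'a) \<Rightarrow> bool" where
  "loop_homotopic X x0 p q \<longleftrightarrow>
     homotopic_with (\<lambda>h. h 0 = x0 \<and> h 1 = x0) (top_of_set {0..1}) X p q"

definition loop_class :: "'a topology \<Rightarrow> 'a \<Rightarrow> (real \<Rightarrow> 'a) \<Rightarrow> (real \<Rightarrow> 'a) set" where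
  "loop_class X x0 p = {q \<in> loops_at X x0. loop_homotopic X x0 p q}"

text \<open>Concatenation of paths (same formula as the library's joinpaths, for arbitrary types).\<close>
definition path_join :: "(real \<Rightarrow> 'a) \<Rightarrow> (real \<Rightarrow> 'a) \<Rightarrow> real \<Rightarrow> 'a" where
  "path_join p q = (\<lambda>t. if t \<le> 1/2 then p (2 * t) else q (2 * t - 1))"

definition fundamental_group :: "'a topology \<Rightarrow> 'a \<Rightarrow> ((real \<Rightarrow> 'a) set) monoid" where
  "fundamental_group X x0 =
     \<lparr> carrier = loop_class X x0 ` loops_at X x0,
       mult = (\<lambda>C D. loop_class X x0 (path_join (SOME p. p \<in> C) (SOME q. q \<in> D))),
       one = loop_class X x0 (\<lambda>t. x0) \<rparr>"

definition int_lattice :: "(real^'n) set" where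
  "int_lattice = {v. \<forall>i. v $ i \<in> \<int>}"

definition real_mat :: "int^'n^'n \<Rightarrow> real^'n^'n" where
  "real_mat A = (\<chi> i j. real_of_int (A $ i $ j))"

definition complex_mat :: "int^'n^'n \<Rightarrow> complex^'n^'n" where
  "complex_mat A = (\<chi> i j. complex_of_int (A $ i $ j))"

text \<open>The identification on \<open>\<real>^k \<times> [0,1]\<close>: points of \<open>\<real>^k\<close> are identified
  modulo \<open>\<int>^k\<close> (giving \<open>\<T>^k \<times> [0,1]\<close>), and \<open>(x,1) \<sim> (\<phi>_A(x),0)\<close>.\<close>
definition mt_rel :: "int^'n^'n \<Rightarrow> ((real^'n) \<times> real) \<Rightarrow> ((real^'n) \<times> real) \<Rightarrow> bool" where
  "mt_rel A p q \<longleftrightarrow>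
     (snd p = snd q \<and> fst p - fst q \<in> int_lattice) \<or>
     (snd p = 1 \<and> snd q = 0 \<and> real_mat A *v fst p - fst q \<in> int_lattice) \<or>
     (snd p = 0 \<and> snd q = 1 \<and> fst p - real_mat A *v fst q \<in> int_lattice)"

definition mt_base :: "((real^'n) \<times> real) topology" where
  "mt_base = prod_topology euclidean (top_of_set {0..1})"

definition mt_class :: "int^'n^'n \<Rightarrow> ((real^'n) \<times> real) \<Rightarrow> ((real^'n) \<times> real) set" where
  "mt_class A p = {q \<in> topspace mt_base. mt_rel A p q}"

definition mapping_torus :: "int^'n^'n \<Rightarrow> (((real^'n) \<times> real) set) topology" where
  "mapping_torus A = quotient_topology mt_base (mt_class A)"

text \<open>The fundamental group of the mapping torus, based at the image of \<open>(0,0)\<close>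
  (the mapping torus is path connected, so the base point is immaterial).\<close>
definition pi1_mapping_torus :: "int^'n^'n \<Rightarrow> ((real \<Rightarrow> ((real^'n) \<times> real) set) set) monoid" where
  "pi1_mapping_torus A = fundamental_group (mapping_torus A) (mt_class A (0, 0))"

definition SL_int :: "int^'n^'n \<Rightarrow> bool" where
  "SL_int A \<longleftrightarrow> det A = 1"

definition has_eigenvalue_one :: "int^'n^'n \<Rightarrow> bool" where
  "has_eigenvalue_one A \<longleftrightarrow> (\<exists>v. v \<noteq> 0 \<and> complex_mat A *v v = v)"

definition diagonalizable_over_C :: "int^'n^'n \<Rightarrow> bool" where
  "diagonalizable_over_C A \<longleftrightarrow>
     (\<exists>P D :: complex^'n^'n. invertible P \<and> (\<forall>i j. i \<noteq> j \<longrightarrow> D $ i $ j = 0) \<and>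
        complex_mat A = P ** D ** matrix_inv P)"

end

theory Submission
  imports Defs
begin

lemma istopology_quotient:
  "istopology (\<lambda>U. U \<subseteq> f ` topspace X \<and> openin X {x \<in> topspace X. f x \<in> U})"
  unfolding istopology_def
proof (rule conjI; intro allI impI ballI)
  fix S T assume a: "S \<subseteq> f ` topspace X \<and> openin X {x \<in> topspace X. f x \<in> S}"
     "T \<subseteq> f ` topspace X \<and> openin X {x \<in> topspace X. f x \<in> T}"
  have "{x \<in> topspace X. f x \<in> S \<inter> T} = {x \<in> topspace X. f x \<in> S} \<inter> {x \<in> topspace X. f x \<in> T}" by auto
  with a show "S \<inter> T \<subseteq> f ` topspace X \<and> openin X {x \<in> topspace X. f x \<in> S \<inter> T}"
    by (metis (no_types, lifting) inf.coboundedI1 openin_Int)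
next
  fix K assume a: "\<forall>S\<in>K. S \<subseteq> f ` topspace X \<and> openin X {x \<in> topspace X. f x \<in> S}"
  have "{x \<in> topspace X. f x \<in> \<Union>K} = (\<Union>S\<in>K. {x \<in> topspace X. f x \<in> S})" by auto
  moreover have "openin X (\<Union>S\<in>K. {x \<in> topspace X. f x \<in> S})" using a by blast
  ultimately show "\<Union>K \<subseteq> f ` topspace X \<and> openin X {x \<in> topspace X. f x \<in> \<Union>K}" using a by auto
qed

lemma openin_quotient_topology:
  "openin (quotient_topology X f) U \<longleftrightarrow> U \<subseteq> f ` topspace X \<and> openin X {x \<in> topspace X. f x \<in> U}"
proof -
  have "openin (quotient_topology X f) = (\<lambda>U. U \<subseteq> f ` topspace X \<and> openin X {x \<in> topspace X. f x \<in> U})"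
    unfolding quotient_topology_def by (rule topology_inverse'[OF istopology_quotient])
  then show ?thesis by simp
qed
lemma topspace_quotient_topology: "topspace (quotient_topology X f) = f ` topspace X"
proof -
  have e: "{x \<in> topspace X. f x \<in> f ` topspace X} = topspace X" by blast
  have "openin (quotient_topology X f) (f ` topspace X)"
    unfolding openin_quotient_topology e by (intro conjI subset_refl openin_topspace)
  then have "f ` topspace X \<subseteq> topspace (quotient_topology X f)" by (rule openin_subset)
  moreover have "topspace (quotient_topology X f) \<subseteq> f ` topspace X"
    using openin_topspace[of "quotient_topology X f"] unfolding openin_quotient_topology by (elim conjE)
  ultimately show ?thesis by (intro subset_antisym)
qed

datatype ('n::finite) mtpt = MT "int^'n^'n" "((real^'n) \<times> real) set"

instantiation mtpt :: (finite) topological_space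
begin
definition open_mtpt_def:
  "open (U :: 'a mtpt set) \<longleftrightarrow>
     (\<forall>A. openin (mapping_torus A) {Q \<in> topspace (mapping_torus A). MT A Q \<in> U})"
instance
proof
  show "open (UNIV :: 'a mtpt set)" unfolding open_mtpt_def
  proof
    fix A :: "int^'a^'a"
    have "{Q \<in> topspace (mapping_torus A). MT A Q \<in> (UNIV :: 'a mtpt set)} = topspace (mapping_torus A)" by blast
    then show "openin (mapping_torus A) {Q \<in> topspace (mapping_torus A). MT A Q \<in> (UNIV :: 'a mtpt set)}"
      by (metis openin_topspace)
  qed
next
  fix S T :: "'a mtpt set" assume a: "open S" "open T"
  show "open (S \<inter> T)" unfolding open_mtpt_def
  proof
    fix A :: "int^'a^'a"
    have e: "{Q \<in> topspace (mapping_torus A). MT A Q \<in> S \<inter> T} = {Q \<in> topspace (mapping_torus A). MT A Q \<in> S} \<inter> {Q \<in> topspace (mapping_torus A). MT A Q \<in> T}" by blast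
    have "openin (mapping_torus A) {Q \<in> topspace (mapping_torus A). MT A Q \<in> S}"
       "openin (mapping_torus A) {Q \<in> topspace (mapping_torus A). MT A Q \<in> T}"
      using a unfolding open_mtpt_def by blast+
    then show "openin (mapping_torus A) {Q \<in> topspace (mapping_torus A). MT A Q \<in> S \<inter> T}"
      unfolding e by (rule openin_Int)
  qed
next
  fix K :: "'a mtpt set set" assume a: "\<forall>S\<in>K. open S"
  show "open (\<Union>K)" unfolding open_mtpt_def
  proof
    fix A :: "int^'a^'a"
    have e: "{Q \<in> topspace (mapping_torus A). MT A Q \<in> \<Union>K} = (\<Union>S\<in>K. {Q \<in> topspace (mapping_torus A). MT A Q \<in> S})" by blast
    have "\<And>S. S \<in> K \<Longrightarrow> openin (mapping_torus A) {Q \<in> topspace (mapping_torus A). MT A Q \<in> S}"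
      using a unfolding open_mtpt_def by blast
    then show "openin (mapping_torus A) {Q \<in> topspace (mapping_torus A). MT A Q \<in> \<Union>K}"
      unfolding e by (intro openin_Union) auto
  qed
qed
end

abbreviation "LL \<equiv> (int_lattice :: (real^'n) set)"

lemma lat_iff: "v \<in> int_lattice \<longleftrightarrow> (\<forall>i. v $ i \<in> \<int>)"
  by (simp add: int_lattice_def)

lemma lat_add: "v \<in> int_lattice \<Longrightarrow> w \<in> int_lattice \<Longrightarrow> v + w \<in> int_lattice"
  by (simp add: lat_iff Ints_add)
lemma lat_diff: "v \<in> int_lattice \<Longrightarrow> w \<in> int_lattice \<Longrightarrow> v - w \<in> int_lattice"
  by (simp add: lat_iff Ints_diff)
lemma lat_neg: "v \<in> int_lattice \<Longrightarrow> - v \<in> int_lattice"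
  by (simp add: lat_iff Ints_minus)
lemma lat_zero: "0 \<in> int_lattice"
  by (simp add: lat_iff)
lemma lat_scale: "c \<in> \<int> \<Longrightarrow> v \<in> int_lattice \<Longrightarrow> c *s v \<in> int_lattice"
  by (simp add: lat_iff Ints_mult)
lemma lat_axis: "axis i (1::real) \<in> int_lattice"
  by (simp add: lat_iff axis_def)

definition intmat :: "real^'n^'m \<Rightarrow> bool" where
  "intmat M \<longleftrightarrow> (\<forall>i j. M $ i $ j \<in> \<int>)"

lemma intmat_real_mat: "intmat (real_mat A)"
  by (simp add: intmat_def real_mat_def)

lemma lat_mat: "intmat M \<Longrightarrow> v \<in> int_lattice \<Longrightarrow> M *v v \<in> int_lattice"
  unfolding intmat_def lat_iff matrix_vector_mult_def
  by (auto intro!: Ints_sum Ints_mult)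

lemma intmat_mult: "intmat M \<Longrightarrow> intmat N \<Longrightarrow> intmat (M ** N)"
  unfolding intmat_def matrix_matrix_mult_def
  by (auto intro!: Ints_sum Ints_mult)

lemma intmat_one: "intmat (mat 1)"
  unfolding intmat_def mat_def by auto

lemma intmat_diff: "intmat M \<Longrightarrow> intmat N \<Longrightarrow> intmat (M - N)"
  unfolding intmat_def by (auto intro!: Ints_diff)

lemma det_Ints: "intmat (M :: real^'n^'n) \<Longrightarrow> det M \<in> \<int>"
  unfolding det_def
  apply (intro Ints_sum Ints_mult Ints_prod)
   apply (rule Ints_of_int)
  apply (simp add: intmat_def)
  done

lemma det_real_mat: "det (real_mat A) = real_of_int (det A)"
  unfolding det_def real_mat_def by (simp add: of_int_sum of_int_prod)

lemma cramer_int: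
  fixes M :: "real^'n^'n"
  assumes M: "intmat M" and d: "det M \<noteq> 0" and v: "v \<in> int_lattice"
  shows "\<exists>u\<in>int_lattice. M *v u = det M *s v"
proof -
  from d obtain B :: "real^'n^'n" where B: "M ** B = mat 1"
    using invertible_det_nz invertible_right_inverse by blast
  define x where "x = B *v v"
  have Mx: "M *v x = v" unfolding x_def by (simp add: matrix_vector_mul_assoc B)
  define u where "u = det M *s x"
  have "u $ k \<in> \<int>" for k
  proof -
    let ?C = "(\<chi> i j. if j = k then (M *v x)$i else M$i$j):: real^'n^'n"
    have c1: "det ?C = x$k * det M"
      by (rule cramer_lemma)
    have "intmat ?C"
      using M v unfolding Mx intmat_def lat_iff by simp
    then have "det ?C \<in> \<int>" by (rule det_Ints)
    then have "x$k * det M \<in> \<int>" by (simp only: c1)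
    then show ?thesis unfolding u_def by (simp add: mult.commute)
  qed
  then have "u \<in> int_lattice" by (simp add: lat_iff)
  moreover have "M *v u = det M *s v"
    unfolding u_def by (simp add: scalar_mult_eq_scaleR matrix_vector_mult_scaleR Mx)
  ultimately show ?thesis by blast
qed


definition Ainv :: "int^'n^'n \<Rightarrow> real^'n^'n" where
  "Ainv A = matrix_inv (real_mat A)"

lemma SL_invertible: "SL_int A \<Longrightarrow> invertible (real_mat A)"
  by (simp add: invertible_det_nz det_real_mat SL_int_def)

lemma SL_inv:
  assumes "SL_int A"
  shows "real_mat A ** Ainv A = mat 1" "Ainv A ** real_mat A = mat 1"
proof -
  have "\<exists>A'. real_mat A ** A' = mat 1 \<and> A' ** real_mat A = mat 1"
    using SL_invertible[OF assms] unfolding invertible_def by blast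
  then have "real_mat A ** Ainv A = mat 1 \<and> Ainv A ** real_mat A = mat 1"
    unfolding Ainv_def matrix_inv_def by (rule someI_ex)
  then show "real_mat A ** Ainv A = mat 1" "Ainv A ** real_mat A = mat 1" by auto
qed

lemma intmat_Ainv:
  assumes "SL_int A"
  shows "intmat (Ainv A)"
  unfolding intmat_def
proof (intro allI)
  fix i j
  have d: "det (real_mat A) = 1" using assms by (simp add: det_real_mat SL_int_def)
  obtain u where u: "u \<in> int_lattice" "real_mat A *v u = det (real_mat A) *s axis j 1"
    using cramer_int[OF intmat_real_mat _ lat_axis, of A j] d by auto
  have "Ainv A *v axis j 1 = Ainv A *v (real_mat A *v u)" using u d by simp
  also have "\<dots> = u" by (simp add: matrix_vector_mul_assoc SL_inv[OF assms])
  finally have "(Ainv A *v axis j 1) $ i \<in> \<int>" using u(1) by (simp add: lat_iff)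
  then show "Ainv A $ i $ j \<in> \<int>" by (simp add: matrix_vector_mult_basis column_def)
qed

primrec mpow :: "real^'n^'n \<Rightarrow> nat \<Rightarrow> real^'n^'n" where
  "mpow M 0 = mat 1"
| "mpow M (Suc k) = M ** mpow M k"

definition zpow :: "int^'n^'n \<Rightarrow> int \<Rightarrow> real^'n^'n" where
  "zpow A m = (if 0 \<le> m then mpow (real_mat A) (nat m) else mpow (Ainv A) (nat (-m)))"

lemma intmat_mpow: "intmat M \<Longrightarrow> intmat (mpow M k)"
  by (induction k) (auto simp: intmat_one intmat_mult)

lemma intmat_zpow: "SL_int A \<Longrightarrow> intmat (zpow A m)"
  unfolding zpow_def by (simp add: intmat_mpow intmat_Ainv intmat_real_mat)

lemma zpow_neg_nat: "zpow A (- int k) = mpow (Ainv A) k"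
proof (cases "k = 0")
  case True then show ?thesis by (simp add: zpow_def)
next
  case False then show ?thesis by (simp add: zpow_def)
qed

lemma zpow_0[simp]: "zpow A 0 = mat 1"
  by (simp add: zpow_def)

lemma zpow_succ:
  assumes "SL_int A"
  shows "zpow A (m + 1) = real_mat A ** zpow A m"
proof (cases "0 \<le> m")
  case True
  then have "nat (m+1) = Suc (nat m)" by simp
  then show ?thesis using True by (simp add: zpow_def)
next
  case False
  define k where "k = nat (- m - 1)"
  have k: "m = - int (Suc k)" using False unfolding k_def by simp
  have "zpow A m = mpow (Ainv A) (Suc k)" unfolding k by (rule zpow_neg_nat)
  then have "zpow A m = Ainv A ** mpow (Ainv A) k" by simp
  moreover have "zpow A (m+1) = mpow (Ainv A) k"
    using zpow_neg_nat[of A k] k by simp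
  ultimately show ?thesis
    by (simp add: matrix_mul_assoc SL_inv[OF assms])
qed

lemma zpow_pred:
  assumes "SL_int A"
  shows "zpow A (m - 1) = Ainv A ** zpow A m"
proof -
  have "zpow A m = real_mat A ** zpow A (m - 1)"
    using zpow_succ[OF assms, of "m - 1"] by simp
  then have "Ainv A ** zpow A m = (Ainv A ** real_mat A) ** zpow A (m - 1)"
    by (simp add: matrix_mul_assoc)
  then show ?thesis by (simp add: SL_inv[OF assms])
qed

lemma zpow_add:
  assumes "SL_int A"
  shows "zpow A (a + b) = zpow A a ** zpow A b"
proof (induction a rule: int_induct[where k=0])
  case base
  then show ?case by simp
next
  case (step1 i)
  have "zpow A (i + 1 + b) = zpow A ((i + b) + 1)" by (simp add: ac_simps)
  also have "\<dots> = real_mat A ** zpow A (i + b)" by (rule zpow_succ[OF assms])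
  also have "\<dots> = zpow A (i + 1) ** zpow A b"
    by (simp add: step1.IH zpow_succ[OF assms] matrix_mul_assoc)
  finally show ?case .
next
  case (step2 i)
  have "zpow A (i - 1 + b) = zpow A ((i + b) - 1)" by (simp add: algebra_simps)
  also have "\<dots> = Ainv A ** zpow A (i + b)" by (rule zpow_pred[OF assms])
  also have "\<dots> = zpow A (i - 1) ** zpow A b"
    by (simp add: step2.IH zpow_pred[OF assms] matrix_mul_assoc)
  finally show ?case .
qed

lemma zpow_1: "zpow A 1 = real_mat A"
  by (simp add: zpow_def)

lemma zpow_m1: "zpow A (-1) = Ainv A"
  by (simp add: zpow_def)

lemma zpow_vec_add:
  assumes "SL_int A"
  shows "zpow A a *v (zpow A b *v x) = zpow A (a + b) *v x"
  by (simp add: zpow_add[OF assms] matrix_vector_mul_assoc)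

lemma zpow_vec_cancel:
  assumes "SL_int A"
  shows "zpow A (-a) *v (zpow A a *v x) = x"
  by (simp add: zpow_vec_add[OF assms])

lemma lat_zpow: "SL_int A \<Longrightarrow> v \<in> int_lattice \<Longrightarrow> zpow A m *v v \<in> int_lattice"
  by (rule lat_mat[OF intmat_zpow])

definition strip :: "((real^'n) \<times> real) set" where
  "strip = UNIV \<times> {0..1}"

lemma mt_base_eq: "mt_base = top_of_set strip"
  unfolding mt_base_def strip_def
  by (metis prod_topology_subtopology_eu subtopology_UNIV)

lemma topspace_mt_base: "topspace mt_base = strip"
  by (simp add: mt_base_eq)

lemma topspace_mt: "topspace (mapping_torus A) = mt_class A ` strip"
  by (simp add: mapping_torus_def topspace_quotient_topology topspace_mt_base)

lemma openin_mt: "openin (mapping_torus A) V \<longleftrightarrow>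
   V \<subseteq> mt_class A ` strip \<and> openin (top_of_set strip) {x \<in> strip. mt_class A x \<in> V}"
  by (simp add: mapping_torus_def openin_quotient_topology topspace_mt_base mt_base_eq[symmetric])

definition SA :: "int^'n^'n \<Rightarrow> 'n mtpt set" where
  "SA A = MT A ` (mt_class A ` strip)"

definition cls :: "int^'n^'n \<Rightarrow> (real^'n) \<times> real \<Rightarrow> 'n mtpt" where
  "cls A p = MT A (mt_class A p)"

lemma openin_SA:
  "openin (top_of_set (SA A)) W \<longleftrightarrow>
     W \<subseteq> SA A \<and> openin (mapping_torus A) {Q \<in> topspace (mapping_torus A). MT A Q \<in> W}"
proof
  assume "openin (top_of_set (SA A)) W"
  then obtain U where U: "open U" "W = SA A \<inter> U" by (auto simp: openin_open)
  have "{Q \<in> topspace (mapping_torus A). MT A Q \<in> W} = {Q \<in> topspace (mapping_torus A). MT A Q \<in> U}"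
    using U(2) by (auto simp: SA_def topspace_mt)
  then show "W \<subseteq> SA A \<and> openin (mapping_torus A) {Q \<in> topspace (mapping_torus A). MT A Q \<in> W}"
    using U unfolding open_mtpt_def by auto
next
  assume a: "W \<subseteq> SA A \<and> openin (mapping_torus A) {Q \<in> topspace (mapping_torus A). MT A Q \<in> W}"
  define V where "V = {Q \<in> topspace (mapping_torus A). MT A Q \<in> W}"
  have "open (MT A ` V)" unfolding open_mtpt_def
  proof
    fix A'
    show "openin (mapping_torus A') {Q \<in> topspace (mapping_torus A'). MT A' Q \<in> MT A ` V}"
    proof (cases "A' = A")
      case True
      have "{Q \<in> topspace (mapping_torus A'). MT A' Q \<in> MT A ` V} = V"
        using True unfolding V_def by auto
      then show ?thesis using a V_def True by simp
    next
      case False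
      then have e: "{Q \<in> topspace (mapping_torus A'). MT A' Q \<in> MT A ` V} = {}" by auto
      show ?thesis unfolding e by (rule openin_empty)
    qed
  qed
  moreover have "W = SA A \<inter> MT A ` V"
    using a unfolding V_def SA_def topspace_mt by auto
  ultimately show "openin (top_of_set (SA A)) W" by (auto simp: openin_open)
qed

lemma cls_in_SA: "p \<in> strip \<Longrightarrow> cls A p \<in> SA A"
  by (simp add: cls_def SA_def)

lemma continuous_cls: "continuous_on strip (cls A)"
  unfolding continuous_map_iff_continuous[symmetric] continuous_map_def
proof (intro conjI allI impI)
  show "cls A \<in> topspace (top_of_set strip) \<rightarrow> topspace euclidean" by simp
  fix U :: "'a mtpt set" assume "openin euclidean U"
  then have "openin (mapping_torus A) {Q \<in> topspace (mapping_torus A). MT A Q \<in> U}"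
    by (simp add: open_mtpt_def)
  then have "openin (top_of_set strip) {x \<in> strip. mt_class A x \<in> {Q \<in> topspace (mapping_torus A). MT A Q \<in> U}}"
    by (simp add: openin_mt)
  moreover have "{x \<in> strip. mt_class A x \<in> {Q \<in> topspace (mapping_torus A). MT A Q \<in> U}} = {x \<in> topspace (top_of_set strip). cls A x \<in> U}"
    by (auto simp: topspace_mt cls_def)
  ultimately show "openin (top_of_set strip) {x \<in> topspace (top_of_set strip). cls A x \<in> U}" by simp
qed

lemma lat_shift:
  assumes "a - b \<in> int_lattice"
  shows "a - c \<in> int_lattice \<longleftrightarrow> b - c \<in> int_lattice"
proof
  assume h: "a - c \<in> int_lattice"
  have "(a - c) - (a - b) \<in> int_lattice" using lat_diff[OF h assms] .
  moreover have "(a - c) - (a - b) = b - c" by (simp add: algebra_simps)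
  ultimately show "b - c \<in> int_lattice" by simp
next
  assume h: "b - c \<in> int_lattice"
  have "(a - b) + (b - c) \<in> int_lattice" using lat_add[OF assms h] .
  moreover have "(a - b) + (b - c) = a - c" by (simp add: algebra_simps)
  ultimately show "a - c \<in> int_lattice" by simp
qed

lemma mt_class_mem: "q \<in> mt_class A p \<longleftrightarrow> q \<in> strip \<and> mt_rel A p q"
  by (simp add: mt_class_def topspace_mt_base)

lemma mt_rel_refl: "mt_rel A p p"
  by (simp add: mt_rel_def lat_zero)

lemma class_eq_lt1:
  assumes p: "p \<in> strip" "snd p < 1" and p': "p' \<in> strip" "snd p' < 1"
  shows "mt_class A p = mt_class A p' \<longleftrightarrow> snd p = snd p' \<and> fst p - fst p' \<in> int_lattice"
proof
  assume "mt_class A p = mt_class A p'"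
  then have "p' \<in> mt_class A p" using p' mt_rel_refl by (metis mt_class_mem)
  then have "mt_rel A p p'" by (simp add: mt_class_mem)
  then show "snd p = snd p' \<and> fst p - fst p' \<in> int_lattice"
    using p p' by (auto simp: mt_rel_def)
next
  assume e: "snd p = snd p' \<and> fst p - fst p' \<in> int_lattice"
  have "mt_rel A p q \<longleftrightarrow> mt_rel A p' q" for q
  proof -
    have d1: "fst p - fst q \<in> int_lattice \<longleftrightarrow> fst p' - fst q \<in> int_lattice"
      using e lat_shift by blast
    have d2: "fst p - real_mat A *v fst q \<in> int_lattice \<longleftrightarrow> fst p' - real_mat A *v fst q \<in> int_lattice"
      using e lat_shift by blast
    show ?thesis using e p p' d1 d2 unfolding mt_rel_def by auto
  qed
  then show "mt_class A p = mt_class A p'" unfolding mt_class_def by auto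
qed

lemma class_top:
  assumes A: "SL_int A"
  shows "mt_class A (y, 1) = mt_class A (real_mat A *v y, 0)"
proof -
  have "mt_rel A (y,1) q \<longleftrightarrow> mt_rel A (real_mat A *v y, 0) q" for q
  proof -
    have d1: "y - fst q \<in> int_lattice \<longleftrightarrow> real_mat A *v y - real_mat A *v fst q \<in> int_lattice"
    proof
      assume "y - fst q \<in> int_lattice"
      then have "real_mat A *v (y - fst q) \<in> int_lattice" by (rule lat_mat[OF intmat_real_mat])
      then show "real_mat A *v y - real_mat A *v fst q \<in> int_lattice" by (simp add: matrix_vector_mult_diff_distrib)
    next
      assume "real_mat A *v y - real_mat A *v fst q \<in> int_lattice"
      then have "Ainv A *v (real_mat A *v y - real_mat A *v fst q) \<in> int_lattice" by (rule lat_mat[OF intmat_Ainv[OF A]])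
      then show "y - fst q \<in> int_lattice"
        by (simp add: matrix_vector_mult_diff_distrib matrix_vector_mul_assoc SL_inv[OF A])
    qed
    show ?thesis using d1 unfolding mt_rel_def by auto
  qed
  then show ?thesis unfolding mt_class_def by auto
qed


section \<open>The covering map\<close>

lemma mv_neg: "(M :: real^'n^'m) *v (- x) = - (M *v x)"
  by (metis diff_0 matrix_vector_mult_0_right matrix_vector_mult_diff_distrib)

definition qmap :: "int^'n^'n \<Rightarrow> (real^'n) \<times> real \<Rightarrow> ((real^'n) \<times> real) set" where
  "qmap A e = mt_class A (zpow A \<lfloor>snd e\<rfloor> *v fst e, snd e - of_int \<lfloor>snd e\<rfloor>)"

definition deck :: "int^'n^'n \<Rightarrow> (real^'n) \<times> int \<Rightarrow> (real^'n) \<times> real \<Rightarrow> (real^'n) \<times> real" where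
  "deck A g e = (zpow A (- snd g) *v fst e + fst g, snd e + of_int (snd g))"

lemma frac_strip: "(y, s - of_int \<lfloor>s\<rfloor>) \<in> strip"
proof -
  have "s - of_int \<lfloor>s\<rfloor> = frac s" by (simp add: frac_def)
  then show ?thesis unfolding strip_def using frac_ge_0[of s] frac_lt_1[of s] by simp
qed

lemma qmap_in: "qmap A e \<in> mt_class A ` strip"
  unfolding qmap_def using frac_strip by blast

lemma q_slab:
  assumes A: "SL_int A" and s: "of_int m \<le> s" "s \<le> of_int m + 1"
  shows "qmap A (x, s) = mt_class A (zpow A m *v x, s - of_int m)"
proof (cases "s < of_int m + 1")
  case True
  then have "\<lfloor>s\<rfloor> = m" using s by (intro floor_unique) auto
  then show ?thesis by (simp add: qmap_def)
next
  case False
  then have s1: "s = of_int m + 1" using s by simp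
  then have fl: "\<lfloor>s\<rfloor> = m + 1" by simp
  have "qmap A (x, s) = mt_class A (zpow A (m + 1) *v x, 0)"
    by (simp add: qmap_def fl s1)
  also have "\<dots> = mt_class A (real_mat A *v (zpow A m *v x), 0)"
    by (simp add: zpow_succ[OF A] matrix_vector_mul_assoc)
  also have "\<dots> = mt_class A (zpow A m *v x, 1)"
    by (rule class_top[OF A, symmetric])
  finally show ?thesis by (simp add: s1)
qed

lemma q_strip:
  assumes A: "SL_int A" and p: "p \<in> strip"
  shows "qmap A p = mt_class A p"
proof -
  obtain x s where e: "p = (x, s)" "0 \<le> s" "s \<le> 1" using p unfolding strip_def by auto
  show ?thesis using q_slab[OF A, of 0 s x] e by simp
qed

lemma qmap_image: "SL_int A \<Longrightarrow> qmap A ` UNIV = mt_class A ` strip"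
proof (rule subset_antisym)
  show "qmap A ` UNIV \<subseteq> mt_class A ` strip" using qmap_in by blast
next
  assume A: "SL_int A"
  show "mt_class A ` strip \<subseteq> qmap A ` UNIV"
  proof
    fix Q assume "Q \<in> mt_class A ` strip"
    then obtain p where "p \<in> strip" "Q = mt_class A p" by blast
    then have "Q = qmap A p" using q_strip[OF A] by simp
    then show "Q \<in> qmap A ` UNIV" by blast
  qed
qed

lemma q_deck:
  assumes A: "SL_int A" and v: "v \<in> int_lattice"
  shows "qmap A (deck A (v, m) e) = qmap A e"
proof -
  obtain x s where e: "e = (x, s)" by fastforce
  have fl: "\<lfloor>s + of_int m\<rfloor> = \<lfloor>s\<rfloor> + m" by simp
  have "zpow A (\<lfloor>s\<rfloor> + m) *v (zpow A (- m) *v x + v) = zpow A \<lfloor>s\<rfloor> *v x + zpow A (\<lfloor>s\<rfloor> + m) *v v"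
    by (simp add: matrix_vector_right_distrib zpow_vec_add[OF A])
  then have d: "zpow A (\<lfloor>s\<rfloor> + m) *v (zpow A (- m) *v x + v) - zpow A \<lfloor>s\<rfloor> *v x \<in> int_lattice"
    using lat_zpow[OF A v] by simp
  have sn: "s + of_int m - of_int (\<lfloor>s\<rfloor> + m) = s - of_int \<lfloor>s\<rfloor>" by simp
  have fr: "0 \<le> s - of_int \<lfloor>s\<rfloor>" "s - of_int \<lfloor>s\<rfloor> < 1"
    using frac_ge_0[of s] frac_lt_1[of s] by (simp_all add: frac_def)
  have "mt_class A (zpow A (\<lfloor>s\<rfloor> + m) *v (zpow A (- m) *v x + v), s - of_int \<lfloor>s\<rfloor>)
        = mt_class A (zpow A \<lfloor>s\<rfloor> *v x, s - of_int \<lfloor>s\<rfloor>)"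
    by (rule class_eq_lt1[THEN iffD2]) (use fr d in \<open>simp_all add: strip_def\<close>)
  then show ?thesis
    unfolding qmap_def deck_def e fst_conv snd_conv fl sn .
qed

lemma fiber:
  assumes A: "SL_int A" and eq: "qmap A e = qmap A e'"
  shows "\<exists>v\<in>int_lattice. \<exists>m. e' = deck A (v, m) e"
proof -
  obtain x s where e: "e = (x, s)" by fastforce
  obtain x' s' where e': "e' = (x', s')" by fastforce
  define a where "a = \<lfloor>s\<rfloor>"
  define b where "b = \<lfloor>s'\<rfloor>"
  have "mt_class A (zpow A a *v x, s - of_int a) = mt_class A (zpow A b *v x', s' - of_int b)"
    using eq unfolding qmap_def e e' a_def b_def by simp
  moreover have fr: "0 \<le> s - of_int a" "s - of_int a < 1" "0 \<le> s' - of_int b" "s' - of_int b < 1"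
    using frac_ge_0[of s] frac_lt_1[of s] frac_ge_0[of s'] frac_lt_1[of s'] by (simp_all add: frac_def a_def b_def)
  ultimately have c: "s - of_int a = s' - of_int b" and w: "zpow A a *v x - zpow A b *v x' \<in> int_lattice"
    using class_eq_lt1[of "(zpow A a *v x, s - of_int a)" "(zpow A b *v x', s' - of_int b)" A]
    by (simp_all add: strip_def)
  define w where "w = zpow A a *v x - zpow A b *v x'"
  define v where "v = - (zpow A (- b) *v w)"
  have v: "v \<in> int_lattice" unfolding v_def w_def by (rule lat_neg[OF lat_zpow[OF A w]])
  have "zpow A (- (b - a)) *v x + v = x'"
    unfolding v_def w_def
    by (simp add: matrix_vector_mult_diff_distrib zpow_vec_add[OF A])
  moreover have "s + of_int (b - a) = s'" using c by simp
  ultimately have "e' = deck A (v, b - a) e" unfolding deck_def e e' by simp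
  then show ?thesis using v by blast
qed

lemma deck_inv:
  assumes A: "SL_int A"
  shows "deck A (- (zpow A m *v v), - m) (deck A (v, m) e) = e"
    "deck A (v, m) (deck A (- (zpow A m *v v), - m) e) = e"
  unfolding deck_def
  by (simp_all add: matrix_vector_right_distrib matrix_vector_mult_diff_distrib zpow_vec_add[OF A] mv_neg)

lemma continuous_deck: "continuous_on S (deck A g)"
proof -
  have "continuous_on S (\<lambda>x. zpow A (- snd g) *v fst x)"
    by (rule continuous_on_compose2[of UNIV "(*v) (zpow A (- snd g))" S fst]) (auto intro: continuous_intros)
  then show ?thesis unfolding deck_def by (intro continuous_intros)
qed

definition Qm :: "int^'n^'n \<Rightarrow> (real^'n) \<times> real \<Rightarrow> 'n mtpt" where
  "Qm A e = MT A (qmap A e)"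

lemma Qm_image: "SL_int A \<Longrightarrow> Qm A ` UNIV = SA A"
proof -
  assume A: "SL_int A"
  have "Qm A ` UNIV = MT A ` (qmap A ` UNIV)" by (auto simp: Qm_def)
  then show ?thesis by (simp add: qmap_image[OF A] SA_def)
qed

lemma Qm_deck: "SL_int A \<Longrightarrow> v \<in> int_lattice \<Longrightarrow> Qm A (deck A (v, m) e) = Qm A e"
  by (simp add: Qm_def q_deck)

lemma Qm_strip: "SL_int A \<Longrightarrow> p \<in> strip \<Longrightarrow> Qm A p = cls A p"
  by (simp add: Qm_def cls_def q_strip)

definition slab :: "int \<Rightarrow> ((real^'n) \<times> real) set" where
  "slab m = UNIV \<times> {of_int m .. of_int m + 1}"

lemma continuous_Qm_slab:
  fixes A :: "int^'n^'n"
  assumes A: "SL_int A"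
  shows "continuous_on (slab m) (Qm A)"
proof -
  define aff where "aff = (\<lambda>e::(real^'n) \<times> real. (zpow A m *v fst e, snd e - of_int m))"
  have ca: "continuous_on (slab m) aff"
  proof -
    have "continuous_on (slab m) (\<lambda>e::(real^'n) \<times> real. zpow A m *v fst e)"
      by (rule continuous_on_compose2[of UNIV "(*v) (zpow A m)" "slab m" fst]) (auto intro: continuous_intros)
    then show ?thesis unfolding aff_def by (intro continuous_intros)
  qed
  have im: "aff ` slab m \<subseteq> strip"
    unfolding aff_def slab_def strip_def by auto
  have "continuous_on (slab m) (\<lambda>e. cls A (aff e))"
    by (rule continuous_on_compose2[OF continuous_cls ca im])
  moreover have "cls A (aff e) = Qm A e" if "e \<in> slab m" for e
  proof -
    obtain x s where e: "e = (x, s)" by fastforce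
    have "of_int m \<le> s" "s \<le> of_int m + 1" using that unfolding e slab_def by auto
    then show ?thesis using q_slab[OF A] unfolding e aff_def cls_def Qm_def by simp
  qed
  ultimately show ?thesis by (rule continuous_on_eq)
qed

lemma continuous_Qm:
  fixes A :: "int^'n^'n"
  assumes A: "SL_int A"
  shows "continuous_on UNIV (Qm A)"
proof -
  define Om where "Om = (\<lambda>m::int. (UNIV :: (real^'n) set) \<times> {of_int m - 1 <..< (of_int m + 1 :: real)})"
  have "continuous_on (Om m) (Qm A)" for m
  proof -
    have "continuous_on (slab (m - 1) \<union> slab m) (Qm A)"
    proof (rule continuous_on_closed_Un)
      show "closed (slab (m - 1))" "closed (slab m)" unfolding slab_def by (intro closed_Times closed_real_atLeastAtMost closed_UNIV)+
      show "continuous_on (slab (m - 1)) (Qm A)" "continuous_on (slab m) (Qm A)" by (rule continuous_Qm_slab[OF A])+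
    qed
    moreover have "Om m \<subseteq> slab (m - 1) \<union> slab m"
      unfolding Om_def slab_def by auto
    ultimately show ?thesis by (rule continuous_on_subset)
  qed
  moreover have "open (Om m)" for m unfolding Om_def by (intro open_Times) auto
  ultimately have "continuous_on (\<Union>m\<in>UNIV. Om m) (Qm A)"
    by (intro continuous_on_open_UN) auto
  moreover have "(\<Union>m\<in>UNIV. Om m) = UNIV"
  proof -
    have "e \<in> Om \<lfloor>snd e\<rfloor>" for e :: "(real^'n) \<times> real"
    proof -
      have "of_int \<lfloor>snd e\<rfloor> - 1 < snd e" "snd e < of_int \<lfloor>snd e\<rfloor> + 1"
        using of_int_floor_le[of "snd e"] real_of_int_floor_add_one_gt[of "snd e"] by linarith+
      then show ?thesis unfolding Om_def by (cases e) auto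
    qed
    then show ?thesis by blast
  qed
  ultimately show ?thesis by simp
qed

lemma Qm_open_map:
  fixes A :: "int^'n^'n"
  assumes A: "SL_int A" and U: "open U"
  shows "openin (top_of_set (SA A)) (Qm A ` U)"
proof -
  have sub: "Qm A ` U \<subseteq> SA A" using Qm_image[OF A] by blast
  have e1: "{Q \<in> topspace (mapping_torus A). MT A Q \<in> Qm A ` U} = qmap A ` U"
    using qmap_in by (auto simp: Qm_def topspace_mt)
  have e2: "{x \<in> strip. mt_class A x \<in> qmap A ` U} =
        strip \<inter> (\<Union>g\<in>int_lattice \<times> UNIV. deck A g -` U)"
  proof (intro Set.set_eqI iffI)
    fix x assume "x \<in> {x \<in> strip. mt_class A x \<in> qmap A ` U}"
    then obtain u where x: "x \<in> strip" "u \<in> U" "mt_class A x = qmap A u" by blast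
    then have "qmap A x = qmap A u" using q_strip[OF A] by simp
    then obtain v m where "v \<in> int_lattice" "u = deck A (v, m) x" using fiber[OF A] by blast
    then show "x \<in> strip \<inter> (\<Union>g\<in>int_lattice \<times> UNIV. deck A g -` U)" using x by blast
  next
    fix x assume "x \<in> strip \<inter> (\<Union>g\<in>int_lattice \<times> UNIV. deck A g -` U)"
    then obtain v m where x: "x \<in> strip" "v \<in> int_lattice" "deck A (v, m) x \<in> U" by blast
    have "mt_class A x = qmap A (deck A (v, m) x)" using q_strip[OF A x(1)] q_deck[OF A x(2)] by simp
    then show "x \<in> {x \<in> strip. mt_class A x \<in> qmap A ` U}" using x by blast
  qed
  have "open (\<Union>g\<in>int_lattice \<times> UNIV. deck A g -` U)"
    by (intro open_UN ballI open_vimage U continuous_deck)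
  then have "openin (top_of_set strip) {x \<in> strip. mt_class A x \<in> qmap A ` U}"
    unfolding e2 by (rule openin_open_Int)
  moreover have "qmap A ` U \<subseteq> mt_class A ` strip" using qmap_in by blast
  ultimately have "openin (mapping_torus A) (qmap A ` U)" by (simp add: openin_mt)
  then show ?thesis unfolding openin_SA e1 using sub by simp
qed

lemma lat_small:
  assumes "w \<in> int_lattice" "norm w < 1"
  shows "w = 0"
proof -
  have "w $ i = 0" for i
  proof (rule ccontr)
    assume "w $ i \<noteq> 0"
    then have "1 \<le> \<bar>w $ i\<bar>" using assms(1) by (intro Ints_nonzero_abs_ge1) (simp_all add: lat_iff)
    then show False using component_le_norm_cart[of w i] assms(2) by simp
  qed
  then show ?thesis by (simp add: vec_eq_iff)
qed

lemma small_ball: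
  assumes A: "SL_int A" and b: "b \<in> ball e (1/2)" "b' \<in> ball e (1/2)"
    and v: "v \<in> int_lattice" "v' \<in> int_lattice"
    and eq: "deck A (v, m) b = deck A (v', m') b'"
  shows "m = m' \<and> v = v' \<and> b = b'"
proof -
  have db: "dist b b' < 1" using b dist_triangle_half_l[of b e 1 b'] by (simp add: dist_commute)
  have s: "snd b + of_int m = snd b' + of_int m'" using eq by (simp add: deck_def)
  have "\<bar>of_int (m - m') :: real\<bar> = dist (snd b) (snd b')" using s by (simp add: dist_real_def)
  also have "\<dots> < 1" using dist_snd_le[of b b'] db by linarith
  finally have mm: "m = m'" by linarith
  have f: "zpow A (- m) *v fst b + v = zpow A (- m) *v fst b' + v'" using eq mm by (simp add: deck_def)
  then have "zpow A (- m) *v (fst b - fst b') = v' - v"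
    by (simp add: matrix_vector_mult_diff_distrib algebra_simps)
  then have "zpow A m *v (zpow A (- m) *v (fst b - fst b')) = zpow A m *v (v' - v)" by simp
  then have "fst b - fst b' = zpow A m *v (v' - v)" using zpow_vec_cancel[OF A, of "-m"] by simp
  then have l: "fst b - fst b' \<in> int_lattice" using lat_zpow[OF A lat_diff[OF v(2) v(1)]] by simp
  have "norm (fst b - fst b') < 1" using dist_fst_le[of b b'] db by (simp add: dist_norm)
  then have "fst b = fst b'" using lat_small[OF l] by simp
  moreover then have "v = v'" using f by simp
  moreover have "snd b = snd b'" using s mm by simp
  ultimately show ?thesis using mm by (simp add: prod_eq_iff)
qed

lemma deck_zero: "deck A (0, 0) e = e"
  by (simp add: deck_def)

lemma covering_Qm:
  fixes A :: "int^'n^'n"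
  assumes A: "SL_int A"
  shows "covering_space UNIV (Qm A) (SA A)"
proof
  show "continuous_on UNIV (Qm A)" by (rule continuous_Qm[OF A])
  show "Qm A ` UNIV = SA A" by (rule Qm_image[OF A])
  fix y assume "y \<in> SA A"
  then obtain e where ye: "y = Qm A e" using Qm_image[OF A] by blast
  define B where "B = ball e (1/2)"
  define T where "T = Qm A ` B"
  define V where "V = (\<lambda>g. deck A g ` B) ` (int_lattice \<times> UNIV)"
  have "y \<in> T" unfolding T_def B_def ye by simp
  moreover have oT: "openin (top_of_set (SA A)) T" unfolding T_def B_def by (rule Qm_open_map[OF A]) simp
  moreover have "\<Union>V = UNIV \<inter> Qm A -` T"
  proof (intro Set.set_eqI iffI)
    fix z assume "z \<in> \<Union>V"
    then obtain v m b where "v \<in> int_lattice" "b \<in> B" "z = deck A (v, m) b" unfolding V_def by auto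
    then show "z \<in> UNIV \<inter> Qm A -` T" unfolding T_def using Qm_deck[OF A] by auto
  next
    fix z assume "z \<in> UNIV \<inter> Qm A -` T"
    then obtain b where b: "b \<in> B" "Qm A z = Qm A b" unfolding T_def by auto
    then have "qmap A b = qmap A z" by (simp add: Qm_def)
    then obtain v m where "v \<in> int_lattice" "z = deck A (v, m) b" using fiber[OF A] by blast
    then show "z \<in> \<Union>V" unfolding V_def using b(1) by blast
  qed
  moreover have "\<forall>u\<in>V. openin (top_of_set UNIV) u"
  proof
    fix u assume "u \<in> V"
    then obtain v m where u: "u = deck A (v, m) ` B" unfolding V_def by auto
    have "u = deck A (- (zpow A m *v v), - m) -` B"
      unfolding u using deck_inv[OF A] by (auto simp: image_iff) (metis)
    then have "open u" unfolding B_def by (simp add: open_vimage continuous_deck)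
    then show "openin (top_of_set UNIV) u" by simp
  qed
  moreover have "pairwise disjnt V"
    unfolding pairwise_def disjnt_def
  proof (intro ballI impI)
    fix u1 u2 assume u: "u1 \<in> V" "u2 \<in> V" "u1 \<noteq> u2"
    from u(1) obtain v1 m1 where u1: "u1 = deck A (v1, m1) ` B" "v1 \<in> int_lattice"
      unfolding V_def by auto
    from u(2) obtain v2 m2 where u2: "u2 = deck A (v2, m2) ` B" "v2 \<in> int_lattice"
      unfolding V_def by auto
    show "u1 \<inter> u2 = {}"
    proof (rule ccontr)
      assume "u1 \<inter> u2 \<noteq> {}"
      then obtain z where "z \<in> u1" "z \<in> u2" by blast
      then obtain b1 b2 where "b1 \<in> B" "b2 \<in> B" "z = deck A (v1, m1) b1" "z = deck A (v2, m2) b2"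
        unfolding u1 u2 by blast
      then have "m1 = m2 \<and> v1 = v2" using small_ball[OF A _ _ u1(2) u2(2), of _ e _ m1 m2] unfolding B_def by metis
      then show False using u u1 u2 by simp
    qed
  qed
  moreover have "\<forall>u\<in>V. \<exists>q. homeomorphism u T (Qm A) q"
  proof
    fix u assume "u \<in> V"
    then obtain v m where u: "u = deck A (v, m) ` B" "v \<in> int_lattice" unfolding V_def by auto
    have ou: "open u"
    proof -
      have "u = deck A (- (zpow A m *v v), - m) -` B"
        unfolding u using deck_inv[OF A] by (auto simp: image_iff) (metis)
      then show ?thesis unfolding B_def by (simp add: open_vimage continuous_deck)
    qed
    have c: "continuous_on u (Qm A)" using continuous_Qm[OF A] by (rule continuous_on_subset) simp
    have im: "Qm A ` u = T"
    proof -
      have "Qm A ` u = (\<lambda>b. Qm A (deck A (v, m) b)) ` B" unfolding u by (simp add: image_image)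
      also have "\<dots> = Qm A ` B" using Qm_deck[OF A u(2)] by simp
      finally show ?thesis unfolding T_def .
    qed
    have inj: "inj_on (Qm A) u"
    proof (rule inj_onI)
      fix z1 z2 assume z: "z1 \<in> u" "z2 \<in> u" "Qm A z1 = Qm A z2"
      then obtain b1 b2 where b: "b1 \<in> B" "b2 \<in> B" "z1 = deck A (v, m) b1" "z2 = deck A (v, m) b2"
        unfolding u by auto
      then have "Qm A b1 = Qm A b2" using z(3) Qm_deck[OF A u(2)] by simp
      then have "qmap A b1 = qmap A b2" by (simp add: Qm_def)
      then obtain w k where w: "w \<in> int_lattice" "b2 = deck A (w, k) b1" using fiber[OF A] by blast
      then have "deck A (w, k) b1 = deck A (0, 0) b2" by (simp add: deck_zero)
      then have "b1 = b2" using small_ball[OF A _ _ w(1) lat_zero] b(1,2) unfolding B_def by blast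
      then show "z1 = z2" using b by simp
    qed
    have om: "openin (top_of_set T) (Qm A ` W)" if "openin (top_of_set u) W" for W
    proof -
      have W: "open W" "W \<subseteq> u" using that ou by (simp_all add: openin_open_eq)
      have "openin (top_of_set (SA A)) (Qm A ` W)" by (rule Qm_open_map[OF A W(1)])
      moreover have "Qm A ` W \<subseteq> T" using W(2) im by blast
      moreover have "T \<subseteq> SA A" using oT by (rule openin_imp_subset)
      ultimately show ?thesis by (rule openin_subset_trans)
    qed
    obtain q where "homeomorphism u T (Qm A) q"
      by (rule homeomorphism_injective_open_map[OF c im inj om])
    then show "\<exists>q. homeomorphism u T (Qm A) q" by blast
  qed
  ultimately show "\<exists>T. y \<in> T \<and> openin (top_of_set (SA A)) T \<and>
             (\<exists>v. \<Union>v = UNIV \<inter> Qm A -` T \<and> (\<forall>u\<in>v. openin (top_of_set UNIV) u) \<and>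
                  pairwise disjnt v \<and> (\<forall>u\<in>v. \<exists>q. homeomorphism u T (Qm A) q))"
    by blast
qed

section \<open>Pullback coverings and lifting for general base spaces\<close>

lemma pullback_covering:
  fixes p :: "'a::topological_space \<Rightarrow> 'b::topological_space"
    and h :: "'z::topological_space \<Rightarrow> 'b"
  assumes cov: "covering_space C p S" and ch: "continuous_on Z h" and hS: "h ` Z \<subseteq> S"
  shows "covering_space {(z, w). z \<in> Z \<and> w \<in> C \<and> h z = p w} fst Z"
proof
  let ?C = "{(z, w). z \<in> Z \<and> w \<in> C \<and> h z = p w}"
  show "continuous_on ?C fst" by (intro continuous_intros)
  have pC: "p ` C = S" using cov by (simp add: covering_space_def)
  show "fst ` ?C = Z"
  proof (intro subset_antisym subsetI)
    fix z assume "z \<in> fst ` ?C" then show "z \<in> Z" by auto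
  next
    fix z assume z: "z \<in> Z"
    then have "h z \<in> p ` C" using hS pC by blast
    then obtain w where "w \<in> C" "h z = p w" by auto
    then show "z \<in> fst ` ?C" using z by (auto intro: image_eqI[of _ _ "(z, w)"])
  qed
  fix z assume z: "z \<in> Z"
  have "h z \<in> S" using z hS by blast
  then obtain T where T: "h z \<in> T" "openin (top_of_set S) T"
    and ex: "\<exists>v. \<Union>v = C \<inter> p -` T \<and> (\<forall>u\<in>v. openin (top_of_set C) u) \<and>
              pairwise disjnt v \<and> (\<forall>u\<in>v. \<exists>q. homeomorphism u T p q)"
    using cov unfolding covering_space_def by blast
  from ex obtain V where V0: "\<Union>V = C \<inter> p -` T \<and> (\<forall>u\<in>V. openin (top_of_set C) u) \<and>
              pairwise disjnt V \<and> (\<forall>u\<in>V. \<exists>q. homeomorphism u T p q)" by (rule exE)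
  have V: "\<Union>V = C \<inter> p -` T" "\<And>u. u \<in> V \<Longrightarrow> openin (top_of_set C) u"
      "pairwise disjnt V" "\<And>u. u \<in> V \<Longrightarrow> \<exists>q. homeomorphism u T p q"
    using V0 by simp_all
  define T' where "T' = Z \<inter> h -` T"
  define sh where "sh = (\<lambda>u. {(z', w). (z', w) \<in> ?C \<and> z' \<in> T' \<and> w \<in> u})"
  have oT': "openin (top_of_set Z) T'"
    unfolding T'_def using continuous_openin_preimage[OF ch _ T(2)] hS by blast
  show "\<exists>T. z \<in> T \<and> openin (top_of_set Z) T \<and>
             (\<exists>v. \<Union>v = ?C \<inter> fst -` T \<and> (\<forall>u\<in>v. openin (top_of_set ?C) u) \<and>
                  pairwise disjnt v \<and> (\<forall>u\<in>v. \<exists>q. homeomorphism u T fst q))"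
  proof (intro exI conjI)
    show "z \<in> T'" unfolding T'_def using z T by simp
    show "openin (top_of_set Z) T'" by (rule oT')
    show "\<Union>(sh ` V) = ?C \<inter> fst -` T'"
    proof (intro Set.set_eqI iffI)
      fix x assume "x \<in> \<Union>(sh ` V)" then show "x \<in> ?C \<inter> fst -` T'" unfolding sh_def by auto
    next
      fix x assume x: "x \<in> ?C \<inter> fst -` T'"
      obtain z' w where xe: "x = (z', w)" by fastforce
      have "w \<in> C \<inter> p -` T" using x unfolding xe T'_def by auto
      then obtain u where "u \<in> V" "w \<in> u" using V(1) by blast
      then have "x \<in> sh u" using x unfolding xe sh_def by simp
      then show "x \<in> \<Union>(sh ` V)" using \<open>u \<in> V\<close> by (rule UN_I[rotated])
    qed
    show "\<forall>u\<in>sh ` V. openin (top_of_set ?C) u"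
    proof
      fix u' assume "u' \<in> sh ` V"
      then obtain u where u: "u \<in> V" "u' = sh u" by blast
      obtain Ou where Ou: "open Ou" "u = C \<inter> Ou" using V(2)[OF u(1)] by (auto simp: openin_open)
      obtain OT where OT: "open OT" "T' = Z \<inter> OT" using oT' by (auto simp: openin_open)
      have "u' = ?C \<inter> (OT \<times> Ou)" unfolding u(2) sh_def using Ou OT by auto
      then show "openin (top_of_set ?C) u'" using Ou OT by (auto intro: openin_open_Int open_Times)
    qed
    show "pairwise disjnt (sh ` V)"
      unfolding pairwise_def disjnt_def
    proof (intro ballI impI)
      fix u1' u2' assume a: "u1' \<in> sh ` V" "u2' \<in> sh ` V" "u1' \<noteq> u2'"
      then obtain u1 u2 where u: "u1 \<in> V" "u2 \<in> V" "u1' = sh u1" "u2' = sh u2" by blast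
      then have "u1 \<noteq> u2" using a by blast
      then have "u1 \<inter> u2 = {}" using V(3) u unfolding pairwise_def disjnt_def by blast
      then show "u1' \<inter> u2' = {}" unfolding u sh_def by auto
    qed
    show "\<forall>u\<in>sh ` V. \<exists>q. homeomorphism u T' fst q"
    proof
      fix u' assume "u' \<in> sh ` V"
      then obtain u where u: "u \<in> V" "u' = sh u" by blast
      obtain q where q: "homeomorphism u T p q" using V(4)[OF u(1)] by blast
      have uC: "u \<subseteq> C" using V(2)[OF u(1)] by (simp add: openin_imp_subset)
      have hT: "h ` T' \<subseteq> T" unfolding T'_def by auto
      have "homeomorphism u' T' fst (\<lambda>z'. (z', q (h z')))"
      proof (rule homeomorphismI)
        show "continuous_on u' fst" by (intro continuous_intros)
        have cq: "continuous_on T q" using q by (simp add: homeomorphism_def)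
        have "continuous_on T' h" using ch by (rule continuous_on_subset) (simp add: T'_def)
        then have "continuous_on T' (\<lambda>z'. q (h z'))" by (rule continuous_on_compose2[OF cq _ hT])
        then show "continuous_on T' (\<lambda>z'. (z', q (h z')))" by (intro continuous_intros)
        show "fst ` u' \<subseteq> T'" unfolding u(2) sh_def by auto
        show "(\<lambda>z'. (z', q (h z'))) ` T' \<subseteq> u'"
        proof
          fix x assume "x \<in> (\<lambda>z'. (z', q (h z'))) ` T'"
          then obtain z' where z': "z' \<in> T'" "x = (z', q (h z'))" by blast
          have "h z' \<in> T" using z' hT by blast
          then have "q (h z') \<in> u" "p (q (h z')) = h z'"
            using q by (auto simp: homeomorphism_def)
          then show "x \<in> u'" using z' uC unfolding u(2) sh_def T'_def by auto
        qed
        show "(fst x, q (h (fst x))) = x" if "x \<in> u'" for x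
        proof -
          obtain z' w where xe: "x = (z', w)" by fastforce
          have x: "x = (z', w)" "w \<in> u" "h z' = p w" using that unfolding u(2) sh_def xe by auto
          have "q (p w) = w" using q x(2) by (simp add: homeomorphism_def)
          then show ?thesis using x by simp
        qed
        show "fst (y, q (h y)) = y" if "y \<in> T'" for y by simp
      qed
      then show "\<exists>q. homeomorphism u' T' fst q" by blast
    qed
  qed
qed

lemma lift_path_gen:
  fixes p :: "'a::real_normed_vector \<Rightarrow> 'b::topological_space"
  assumes cov: "covering_space C p S" and e: "e \<in> C"
    and g: "path g" "path_image g \<subseteq> S" "g 0 = p e"
  obtains l where "path l" "path_image l \<subseteq> C" "l 0 = e" "\<And>t. t \<in> {0..1} \<Longrightarrow> p (l t) = g t"
proof -
  let ?C = "{(z, w). z \<in> {0..1::real} \<and> w \<in> C \<and> g z = p w}"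
  have cg: "continuous_on {0..1} g" using g(1) by (simp add: path_def)
  have gS: "g ` {0..1} \<subseteq> S" using g(2) by (simp add: path_image_def)
  have cov': "covering_space ?C fst {0..1}" by (rule pullback_covering[OF cov cg gS])
  have a: "(0, e) \<in> ?C" using e g(3) by simp
  have pid: "path (\<lambda>t::real. t)" by (simp add: path_def continuous_on_id)
  have pim: "path_image (\<lambda>t::real. t) \<subseteq> {0..1}" by (simp add: path_image_def)
  obtain H where H: "path H" "path_image H \<subseteq> ?C" "pathstart H = (0, e)"
    "\<And>t. t \<in> {0..1} \<Longrightarrow> fst (H t) = t"
    by (rule covering_space_lift_path_strong[OF cov' a pid pim]) (auto simp: pathstart_def)
  show ?thesis
  proof
    show "path (snd \<circ> H)" using H(1) unfolding path_def by (intro continuous_intros)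
    show "path_image (snd \<circ> H) \<subseteq> C" using H(2) unfolding path_image_def by auto
    show "(snd \<circ> H) 0 = e" using H(3) by (simp add: pathstart_def)
    fix t :: real assume t: "t \<in> {0..1}"
    then have "H t \<in> path_image H" by (simp add: path_image_def)
    then have "H t \<in> ?C" using H(2) by (rule subsetD[rotated])
    then have "g (fst (H t)) = p (snd (H t))" by auto
    then show "p ((snd \<circ> H) t) = g t" using H(4)[OF t] by simp
  qed
qed


lemma joinpaths_apply: "(g1 +++ g2) t = (if t \<le> 1/2 then g1 (2 * t) else g2 (2 * t - 1))"
  by (simp add: joinpaths_def)

lemma monodromy_gen:
  fixes p :: "'a::real_normed_vector \<Rightarrow> 'b::topological_space"
  assumes cov: "covering_space C p S" and hom: "homotopic_paths S g1 g2"
    and l1: "path l1" "path_image l1 \<subseteq> C" "\<And>t. t \<in> {0..1} \<Longrightarrow> p (l1 t) = g1 t"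
    and l2: "path l2" "path_image l2 \<subseteq> C" "\<And>t. t \<in> {0..1} \<Longrightarrow> p (l2 t) = g2 t"
    and st: "l1 0 = l2 0"
  shows "l1 1 = l2 1"
proof -
  obtain H where cH: "continuous_on ({0..1} \<times> {0..1}) H" and HS: "H \<in> ({0..1} \<times> {0..1}) \<rightarrow> S"
    and H0: "\<forall>x\<in>{0..1}. H (0, x) = g1 x" and H1: "\<forall>x\<in>{0..1}. H (1, x) = g2 x"
    and Hend: "\<forall>t\<in>{0..1::real}. pathstart (H \<circ> Pair t) = pathstart g1 \<and> pathfinish (H \<circ> Pair t) = pathfinish g1"
    using hom unfolding homotopic_paths by blast
  have Hs: "H (t, 0) = g1 0" "H (t, 1) = g1 1" if "t \<in> {0..1}" for t
    using Hend that by (auto simp: pathstart_def pathfinish_def)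
  have g12: "g1 0 = g2 0" "g1 1 = g2 1"
    using homotopic_paths_imp_pathstart[OF hom] homotopic_paths_imp_pathfinish[OF hom]
    by (simp_all add: pathstart_def pathfinish_def)
  define Z where "Z = {0..1::real} \<times> {0..1::real}"
  let ?C = "{(z, w). z \<in> Z \<and> w \<in> C \<and> H z = p w}"
  have cov': "covering_space ?C fst Z"
    by (rule pullback_covering[OF cov]) (use cH HS in \<open>auto simp: Z_def\<close>)
  define a1 where "a1 = (\<lambda>x::real. (0::real, x)) +++ (\<lambda>t. (t, 1::real))"
  define a2 where "a2 = (\<lambda>t::real. (t, 0::real)) +++ (\<lambda>x. (1::real, x))"
  define m1 where "m1 = (\<lambda>x::real. ((0::real, x), l1 x)) +++ (\<lambda>t. ((t, 1::real), l1 1))"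
  define m2 where "m2 = (\<lambda>t::real. ((t, 0::real), l2 0)) +++ (\<lambda>x. ((1::real, x), l2 x))"
  have l1in: "l1 x \<in> C" if "x \<in> {0..1}" for x using l1(2) that by (auto simp: path_image_def)
  have l2in: "l2 x \<in> C" if "x \<in> {0..1}" for x using l2(2) that by (auto simp: path_image_def)
  have cl1: "continuous_on {0..1} l1" "continuous_on {0..1} l2" using l1(1) l2(1) by (simp_all add: path_def)
  have pa1: "path a1" unfolding a1_def by (intro path_join_imp) (auto simp: path_def pathstart_def pathfinish_def intro!: continuous_intros)
  have pa2: "path a2" unfolding a2_def by (intro path_join_imp) (auto simp: path_def pathstart_def pathfinish_def intro!: continuous_intros)
  have pm1: "path m1" unfolding m1_def
    by (intro path_join_imp) (auto simp: path_def pathstart_def pathfinish_def intro!: continuous_intros cl1)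
  have pm2: "path m2" unfolding m2_def
    by (intro path_join_imp) (auto simp: path_def pathstart_def pathfinish_def intro!: continuous_intros cl1)
  have ia1: "path_image a1 \<subseteq> Z" unfolding a1_def Z_def
    by (rule order_trans[OF path_image_join_subset]) (auto simp: path_image_def)
  have ia2: "path_image a2 \<subseteq> Z" unfolding a2_def Z_def
    by (rule order_trans[OF path_image_join_subset]) (auto simp: path_image_def)
  have im1: "path_image m1 \<subseteq> ?C" unfolding m1_def
  proof (rule order_trans[OF path_image_join_subset], rule Un_least)
    show "path_image (\<lambda>x. ((0, x), l1 x)) \<subseteq> ?C"
      unfolding path_image_def using l1in l1(3) H0 by (auto simp: Z_def)
    show "path_image (\<lambda>t. ((t, 1), l1 1)) \<subseteq> ?C"
      unfolding path_image_def using l1in l1(3) Hs by (auto simp: Z_def)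
  qed
  have im2: "path_image m2 \<subseteq> ?C" unfolding m2_def
  proof (rule order_trans[OF path_image_join_subset], rule Un_least)
    show "path_image (\<lambda>t. ((t, 0), l2 0)) \<subseteq> ?C"
      unfolding path_image_def using l2in l2(3) Hs g12 by (auto simp: Z_def)
    show "path_image (\<lambda>x. ((1, x), l2 x)) \<subseteq> ?C"
      unfolding path_image_def using l2in l2(3) H1 by (auto simp: Z_def)
  qed
  have f1: "fst (m1 t) = a1 t" for t unfolding m1_def a1_def joinpaths_apply by simp
  have f2: "fst (m2 t) = a2 t" for t unfolding m2_def a2_def joinpaths_apply by simp
  have ha: "homotopic_paths Z a1 a2"
  proof (rule homotopic_paths_linear[OF pa1 pa2])
    show "pathstart a2 = pathstart a1" "pathfinish a2 = pathfinish a1"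
      unfolding a1_def a2_def by (simp_all add: pathstart_def pathfinish_def joinpaths_apply)
    fix t :: real assume "t \<in> {0..1}"
    then have "a1 t \<in> Z" "a2 t \<in> Z" using ia1 ia2 by (auto simp: path_image_def)
    moreover have "convex Z" unfolding Z_def by (intro convex_Times convex_real_interval)
    ultimately show "closed_segment (a1 t) (a2 t) \<subseteq> Z" by (rule closed_segment_subset)
  qed
  have "pathfinish m1 = pathfinish m2"
    by (rule covering_space_monodromy[OF cov' pa1 ia1 pa2 ia2 ha pm1 im1 _ pm2 im2])
       (simp add: f1, simp add: f2, simp add: m1_def m2_def pathstart_def joinpaths_apply st)
  then show ?thesis by (simp add: m1_def m2_def pathfinish_def joinpaths_apply)
qed

definition unMT :: "'n::finite mtpt \<Rightarrow> ((real^'n) \<times> real) set" where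
  "unMT z = (case z of MT _ Q \<Rightarrow> Q)"

lemma unMT_MT[simp]: "unMT (MT A Q) = Q"
  by (simp add: unMT_def)

lemma cont_MT: "continuous_map (mapping_torus A) (top_of_set (SA A)) (MT A)"
  unfolding continuous_map_def
proof (intro conjI allI impI)
  show "MT A \<in> topspace (mapping_torus A) \<rightarrow> topspace (top_of_set (SA A))"
    by (auto simp: SA_def topspace_mt)
  fix W assume "openin (top_of_set (SA A)) W"
  then show "openin (mapping_torus A) {x \<in> topspace (mapping_torus A). MT A x \<in> W}"
    by (simp add: openin_SA)
qed

lemma cont_unMT: "continuous_map (top_of_set (SA A)) (mapping_torus A) unMT"
  unfolding continuous_map_def
proof (intro conjI allI impI)
  show "unMT \<in> topspace (top_of_set (SA A)) \<rightarrow> topspace (mapping_torus A)"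
    by (auto simp: SA_def topspace_mt)
  fix V assume V: "openin (mapping_torus A) V"
  have sub: "V \<subseteq> topspace (mapping_torus A)" using V by (rule openin_subset)
  have e: "{Q \<in> topspace (mapping_torus A). MT A Q \<in> {x \<in> SA A. unMT x \<in> V}} = V"
    using sub by (auto simp: SA_def topspace_mt)
  have "openin (top_of_set (SA A)) {x \<in> SA A. unMT x \<in> V}"
    unfolding openin_SA e using V by auto
  then show "openin (top_of_set (SA A)) {x \<in> topspace (top_of_set (SA A)). unMT x \<in> V}" by simp
qed

lemma unMT_comp: "unMT \<circ> (MT A \<circ> g) = g"
  by (simp add: fun_eq_iff)

lemma pathin_iff:
  "pathin (mapping_torus A) g \<longleftrightarrow> path (MT A \<circ> g) \<and> path_image (MT A \<circ> g) \<subseteq> SA A"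
proof
  assume "pathin (mapping_torus A) g"
  then have "continuous_map (top_of_set {0..1}) (top_of_set (SA A)) (MT A \<circ> g)"
    unfolding pathin_def by (rule continuous_map_compose[OF _ cont_MT])
  then show "path (MT A \<circ> g) \<and> path_image (MT A \<circ> g) \<subseteq> SA A"
    unfolding continuous_map_in_subtopology path_def path_image_def by auto
next
  assume a: "path (MT A \<circ> g) \<and> path_image (MT A \<circ> g) \<subseteq> SA A"
  then have "continuous_map (top_of_set {0..1}) (top_of_set (SA A)) (MT A \<circ> g)"
    unfolding continuous_map_in_subtopology path_def path_image_def by auto
  then have "continuous_map (top_of_set {0..1}) (mapping_torus A) (unMT \<circ> (MT A \<circ> g))"
    by (rule continuous_map_compose[OF _ cont_unMT])
  then show "pathin (mapping_torus A) g" unfolding pathin_def unMT_comp .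
qed

abbreviation "c0 A \<equiv> mt_class A (0, 0)"

lemma loops_iff:
  "g \<in> loops_at (mapping_torus A) (c0 A) \<longleftrightarrow>
     path (MT A \<circ> g) \<and> path_image (MT A \<circ> g) \<subseteq> SA A \<and> g 0 = c0 A \<and> g 1 = c0 A"
  by (simp add: loops_at_def pathin_iff)

lemma loop_hom_iff:
  assumes g: "g \<in> loops_at (mapping_torus A) (c0 A)" and h: "h \<in> loops_at (mapping_torus A) (c0 A)"
  shows "loop_homotopic (mapping_torus A) (c0 A) g h \<longleftrightarrow> homotopic_paths (SA A) (MT A \<circ> g) (MT A \<circ> h)"
proof
  assume "loop_homotopic (mapping_torus A) (c0 A) g h"
  then have "homotopic_with (\<lambda>j. j 0 = c0 A \<and> j 1 = c0 A) (top_of_set {0..1}) (mapping_torus A) g h"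
    by (simp add: loop_homotopic_def)
  then show "homotopic_paths (SA A) (MT A \<circ> g) (MT A \<circ> h)"
    unfolding homotopic_paths_def
    by (rule homotopic_with_compose_continuous_map_left[OF _ cont_MT]) (use g in \<open>auto simp: loops_at_def pathstart_def pathfinish_def\<close>)
next
  assume "homotopic_paths (SA A) (MT A \<circ> g) (MT A \<circ> h)"
  then have "homotopic_with (\<lambda>j. j 0 = c0 A \<and> j 1 = c0 A) (top_of_set {0..1}) (mapping_torus A)
               (unMT \<circ> (MT A \<circ> g)) (unMT \<circ> (MT A \<circ> h))"
    unfolding homotopic_paths_def
    by (rule homotopic_with_compose_continuous_map_left[OF _ cont_unMT]) (use g in \<open>auto simp: loops_at_def pathstart_def pathfinish_def\<close>)
  then show "loop_homotopic (mapping_torus A) (c0 A) g h"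
    by (simp add: loop_homotopic_def unMT_comp)
qed

section \<open>Lifting loops\<close>

lemma Qm_base: "Qm A (0, 0) = MT A (c0 A)"
  by (simp add: Qm_def qmap_def)

definition isLift :: "int^'n^'n \<Rightarrow> (real \<Rightarrow> ((real^'n) \<times> real) set) \<Rightarrow> (real \<Rightarrow> (real^'n) \<times> real) \<Rightarrow> bool" where
  "isLift A g l \<longleftrightarrow> path l \<and> l 0 = (0, 0) \<and> (\<forall>t\<in>{0..1}. Qm A (l t) = MT A (g t))"

definition lend :: "int^'n^'n \<Rightarrow> (real \<Rightarrow> ((real^'n) \<times> real) set) \<Rightarrow> (real^'n) \<times> real" where
  "lend A g = (SOME f. \<exists>l. isLift A g l \<and> l 1 = f)"

lemma lift_exists:
  assumes A: "SL_int A" and g: "g \<in> loops_at (mapping_torus A) (c0 A)"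
  shows "\<exists>l. isLift A g l"
proof -
  have g': "path (MT A \<circ> g)" "path_image (MT A \<circ> g) \<subseteq> SA A" "(MT A \<circ> g) 0 = Qm A (0, 0)"
    using g by (auto simp: loops_iff Qm_base)
  obtain l where "path l" "path_image l \<subseteq> UNIV" "l 0 = (0, 0)" "\<And>t. t \<in> {0..1} \<Longrightarrow> Qm A (l t) = (MT A \<circ> g) t"
    by (rule lift_path_gen[OF covering_Qm[OF A] _ g']) auto
  then show ?thesis unfolding isLift_def by auto
qed

lemma lift_monodromy:
  assumes A: "SL_int A" and g: "g \<in> loops_at (mapping_torus A) (c0 A)" and h: "h \<in> loops_at (mapping_torus A) (c0 A)"
    and hom: "homotopic_paths (SA A) (MT A \<circ> g) (MT A \<circ> h)"
    and l1: "isLift A g l1" and l2: "isLift A h l2"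
  shows "l1 1 = l2 1"
  by (rule monodromy_gen[OF covering_Qm[OF A] hom]) (use l1 l2 in \<open>auto simp: isLift_def\<close>)

lemma lend_eq:
  assumes A: "SL_int A" and g: "g \<in> loops_at (mapping_torus A) (c0 A)" and l: "isLift A g l"
  shows "lend A g = l 1"
proof -
  have "\<exists>f. \<exists>l. isLift A g l \<and> l 1 = f" using l by blast
  then have "\<exists>l'. isLift A g l' \<and> l' 1 = lend A g" unfolding lend_def by (rule someI_ex)
  then obtain l' where l': "isLift A g l'" "l' 1 = lend A g" by blast
  have hom: "homotopic_paths (SA A) (MT A \<circ> g) (MT A \<circ> g)" using g by (simp add: loops_iff)
  show ?thesis using lift_monodromy[OF A g g hom l' (1) l] l'(2) by simp
qed

lemma lend_hom:
  assumes A: "SL_int A" and g: "g \<in> loops_at (mapping_torus A) (c0 A)" and h: "h \<in> loops_at (mapping_torus A) (c0 A)"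
    and hom: "loop_homotopic (mapping_torus A) (c0 A) g h"
  shows "lend A g = lend A h"
proof -
  obtain l1 l2 where l: "isLift A g l1" "isLift A h l2" using lift_exists[OF A g] lift_exists[OF A h] by blast
  have "l1 1 = l2 1"
    by (rule lift_monodromy[OF A g h _ l]) (use hom loop_hom_iff[OF g h] in simp)
  then show ?thesis using lend_eq[OF A g l(1)] lend_eq[OF A h l(2)] by simp
qed

lemma lend_inj:
  assumes A: "SL_int A" and g: "g \<in> loops_at (mapping_torus A) (c0 A)" and h: "h \<in> loops_at (mapping_torus A) (c0 A)"
    and eq: "lend A g = lend A h"
  shows "loop_homotopic (mapping_torus A) (c0 A) g h"
proof -
  obtain l1 l2 where l: "isLift A g l1" "isLift A h l2" using lift_exists[OF A g] lift_exists[OF A h] by blast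
  have e1: "l1 1 = l2 1" using eq lend_eq[OF A g l(1)] lend_eq[OF A h l(2)] by simp
  have pl: "path l1" "path l2" "l1 0 = (0,0)" "l2 0 = (0,0)" using l by (auto simp: isLift_def)
  have "homotopic_paths UNIV l1 l2"
    by (rule homotopic_paths_linear) (use pl e1 in \<open>auto simp: pathstart_def pathfinish_def\<close>)
  then have h1: "homotopic_paths (SA A) (Qm A \<circ> l1) (Qm A \<circ> l2)"
    by (rule homotopic_paths_continuous_image[OF _ continuous_Qm[OF A]]) (use Qm_image[OF A] in blast)
  have pq: "path (Qm A \<circ> l1)" "path_image (Qm A \<circ> l1) \<subseteq> SA A"
    "path (Qm A \<circ> l2)" "path_image (Qm A \<circ> l2) \<subseteq> SA A"
    using homotopic_paths_imp_path[OF h1] homotopic_paths_imp_subset[OF h1] by auto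
  have "homotopic_paths (SA A) (MT A \<circ> g) (Qm A \<circ> l1)"
    by (rule homotopic_paths_sym, rule homotopic_paths_eq[OF pq(1,2)]) (use l in \<open>auto simp: isLift_def\<close>)
  also have "homotopic_paths (SA A) \<dots> (Qm A \<circ> l2)" by (rule h1)
  also have "homotopic_paths (SA A) \<dots> (MT A \<circ> h)"
    by (rule homotopic_paths_eq[OF pq(3,4)]) (use l in \<open>auto simp: isLift_def\<close>)
  finally show ?thesis using loop_hom_iff[OF g h] by simp
qed

lemma lend_fiber:
  assumes A: "SL_int A" and g: "g \<in> loops_at (mapping_torus A) (c0 A)"
  shows "\<exists>v\<in>int_lattice. \<exists>m. lend A g = (v, of_int m)"
proof -
  obtain l where l: "isLift A g l" using lift_exists[OF A g] by blast
  have "Qm A (l 1) = MT A (g 1)" using l by (auto simp: isLift_def)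
  also have "\<dots> = Qm A (0, 0)" using g by (simp add: loops_iff Qm_base)
  finally have "qmap A (0, 0) = qmap A (l 1)" by (simp add: Qm_def)
  then obtain v m where "v \<in> int_lattice" "l 1 = deck A (v, m) (0, 0)" using fiber[OF A] by blast
  then show ?thesis using lend_eq[OF A g l] by (auto simp: deck_def)
qed

lemma lend_surj:
  fixes A :: "int^'n^'n"
  assumes A: "SL_int A" and v: "v \<in> int_lattice"
  shows "\<exists>g\<in>loops_at (mapping_torus A) (c0 A). lend A g = (v, of_int m)"
proof -
  define l where "l = linepath (0::(real^'n) \<times> real) (v, of_int m)"
  define g where "g = (\<lambda>t. qmap A (l t))"
  have pl: "path l" unfolding l_def by simp
  have mg: "MT A \<circ> g = Qm A \<circ> l" by (simp add: g_def Qm_def fun_eq_iff)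
  have "path (Qm A \<circ> l)" using pl unfolding path_def comp_def
    by (rule continuous_on_compose2[OF continuous_Qm[OF A]]) simp
  moreover have "path_image (Qm A \<circ> l) \<subseteq> SA A" using Qm_image[OF A] by (auto simp: path_image_def)
  moreover have "g 0 = c0 A" by (simp add: g_def l_def linepath_def qmap_def)
  moreover have "g 1 = c0 A"
  proof -
    have "g 1 = qmap A (deck A (v, m) (0, 0))" by (simp add: g_def l_def linepath_def deck_def)
    also have "\<dots> = qmap A (0, 0)" by (rule q_deck[OF A v])
    finally show ?thesis by (simp add: qmap_def)
  qed
  ultimately have gl: "g \<in> loops_at (mapping_torus A) (c0 A)" unfolding loops_iff mg by simp
  have "isLift A g l" unfolding isLift_def using pl by (simp add: g_def Qm_def l_def linepath_def)
  then have "lend A g = l 1" by (rule lend_eq[OF A gl])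
  then show ?thesis using gl by (auto simp: l_def linepath_def)
qed

lemma path_join_loop:
  assumes g: "g \<in> loops_at (mapping_torus A) (c0 A)" and h: "h \<in> loops_at (mapping_torus A) (c0 A)"
  shows "path_join g h \<in> loops_at (mapping_torus A) (c0 A)"
proof -
  have e: "MT A \<circ> path_join g h = (MT A \<circ> g) +++ (MT A \<circ> h)"
    by (simp add: fun_eq_iff path_join_def joinpaths_def)
  have gg: "path (MT A \<circ> g)" "path_image (MT A \<circ> g) \<subseteq> SA A" "g 0 = c0 A" "g 1 = c0 A"
    and hh: "path (MT A \<circ> h)" "path_image (MT A \<circ> h) \<subseteq> SA A" "h 0 = c0 A" "h 1 = c0 A"
    using g h by (simp_all add: loops_iff)
  have "path ((MT A \<circ> g) +++ (MT A \<circ> h))"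
    by (rule path_join_imp) (use gg hh in \<open>simp_all add: pathstart_def pathfinish_def\<close>)
  moreover have "path_image ((MT A \<circ> g) +++ (MT A \<circ> h)) \<subseteq> SA A"
    using path_image_join_subset gg(2) hh(2) by blast
  moreover have "path_join g h 0 = c0 A" "path_join g h 1 = c0 A"
    using gg hh by (simp_all add: path_join_def)
  ultimately show ?thesis unfolding loops_iff e by simp
qed

lemma lend_join:
  assumes A: "SL_int A" and g: "g \<in> loops_at (mapping_torus A) (c0 A)" and h: "h \<in> loops_at (mapping_torus A) (c0 A)"
    and v: "v \<in> int_lattice" and lg: "lend A g = (v, of_int m)"
  shows "lend A (path_join g h) = deck A (v, m) (lend A h)"
proof -
  obtain l1 l2 where l: "isLift A g l1" "isLift A h l2" using lift_exists[OF A g] lift_exists[OF A h] by blast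
  have l11: "l1 1 = (v, of_int m)" using lend_eq[OF A g l(1)] lg by simp
  have p1: "path l1" "l1 0 = (0,0)" "\<And>t. t \<in> {0..1} \<Longrightarrow> Qm A (l1 t) = MT A (g t)"
    and p2: "path l2" "l2 0 = (0,0)" "\<And>t. t \<in> {0..1} \<Longrightarrow> Qm A (l2 t) = MT A (h t)"
    using l by (auto simp: isLift_def)
  define l where "l = l1 +++ (deck A (v, m) \<circ> l2)"
  have pd: "path (deck A (v, m) \<circ> l2)" using p2(1) unfolding path_def comp_def
    by (rule continuous_on_compose2[OF continuous_deck[of UNIV]]) simp
  have "isLift A (path_join g h) l"
    unfolding isLift_def
  proof (intro conjI ballI)
    show "path l" unfolding l_def
      by (rule path_join_imp[OF p1(1) pd]) (simp add: pathstart_def pathfinish_def l11 p2(2) deck_def)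
    show "l 0 = (0, 0)" by (simp add: l_def joinpaths_def p1(2))
    fix t :: real assume t: "t \<in> {0..1}"
    show "Qm A (l t) = MT A (path_join g h t)"
    proof (cases "t \<le> 1/2")
      case True
      then show ?thesis using t p1(3)[of "2 * t"] by (simp add: l_def joinpaths_def path_join_def)
    next
      case False
      then show ?thesis using t p2(3)[of "2 * t - 1"] Qm_deck[OF A v]
        by (simp add: l_def joinpaths_def path_join_def)
    qed
  qed
  then have "lend A (path_join g h) = l 1" by (rule lend_eq[OF A path_join_loop[OF g h]])
  also have "\<dots> = deck A (v, m) (l2 1)" by (simp add: l_def joinpaths_def)
  also have "\<dots> = deck A (v, m) (lend A h)" using lend_eq[OF A h l(2)] by simp
  finally show ?thesis .
qed

section \<open>The fundamental group as an explicit group\<close>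

definition opA :: "int^'n^'n \<Rightarrow> (real^'n) \<times> int \<Rightarrow> (real^'n) \<times> int \<Rightarrow> (real^'n) \<times> int" where
  "opA A x y = (zpow A (- snd x) *v fst y + fst x, snd x + snd y)"

definition lendi :: "int^'n^'n \<Rightarrow> (real \<Rightarrow> ((real^'n) \<times> real) set) \<Rightarrow> (real^'n) \<times> int" where
  "lendi A g = (fst (lend A g), \<lfloor>snd (lend A g)\<rfloor>)"

definition Th :: "int^'n^'n \<Rightarrow> (real \<Rightarrow> ((real^'n) \<times> real) set) set \<Rightarrow> (real^'n) \<times> int" where
  "Th A C = lendi A (SOME g. g \<in> C)"

abbreviation "LOOPS A \<equiv> loops_at (mapping_torus A) (c0 A)"
abbreviation "LH A \<equiv> loop_homotopic (mapping_torus A) (c0 A)"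
abbreviation "LC A \<equiv> loop_class (mapping_torus A) (c0 A)"

lemma lendi_lend:
  assumes A: "SL_int A" and g: "g \<in> LOOPS A"
  shows "lend A g = (fst (lendi A g), of_int (snd (lendi A g)))" "lendi A g \<in> int_lattice \<times> UNIV"
  using lend_fiber[OF A g] by (auto simp: lendi_def)

lemma LH_refl: "g \<in> LOOPS A \<Longrightarrow> LH A g g"
  by (simp add: loop_homotopic_def loops_at_def pathin_def)

lemma LH_sym: "LH A g h \<Longrightarrow> LH A h g"
  unfolding loop_homotopic_def by (rule homotopic_with_symD)

lemma LH_trans: "LH A g h \<Longrightarrow> LH A h k \<Longrightarrow> LH A g k"
  unfolding loop_homotopic_def by (rule homotopic_with_trans)

lemma LC_mem: "g \<in> LOOPS A \<Longrightarrow> g \<in> LC A g"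
  by (simp add: loop_class_def LH_refl)

lemma LC_some:
  assumes "g \<in> LOOPS A"
  shows "(SOME h. h \<in> LC A g) \<in> LOOPS A \<and> LH A g (SOME h. h \<in> LC A g)"
proof -
  have "(SOME h. h \<in> LC A g) \<in> LC A g" using LC_mem[OF assms] by (rule someI[of "\<lambda>h. h \<in> LC A g"])
  then show ?thesis by (simp add: loop_class_def)
qed

lemma LC_eq: "LH A g h \<Longrightarrow> LC A g = LC A h"
  unfolding loop_class_def using LH_sym LH_trans by blast

lemma Th_LC:
  assumes A: "SL_int A" and g: "g \<in> LOOPS A"
  shows "Th A (LC A g) = lendi A g"
proof -
  have "lend A (SOME h. h \<in> LC A g) = lend A g"
    using LC_some[OF g] lend_hom[OF A g] LH_sym by metis
  then show ?thesis by (simp add: Th_def lendi_def)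
qed

lemma carrier_pi1: "carrier (pi1_mapping_torus A) = LC A ` LOOPS A"
  by (simp add: pi1_mapping_torus_def fundamental_group_def)

lemma mult_pi1: "mult (pi1_mapping_torus A) C D = LC A (path_join (SOME p. p \<in> C) (SOME q. q \<in> D))"
  by (simp add: pi1_mapping_torus_def fundamental_group_def)

lemma carrier_some:
  assumes "C \<in> carrier (pi1_mapping_torus A)"
  shows "(SOME g. g \<in> C) \<in> LOOPS A" "C = LC A (SOME g. g \<in> C)"
proof -
  obtain g where g: "g \<in> LOOPS A" "C = LC A g" using assms by (auto simp: carrier_pi1)
  show "(SOME g. g \<in> C) \<in> LOOPS A" using LC_some[OF g(1)] g(2) by simp
  show "C = LC A (SOME g. g \<in> C)" using LC_some[OF g(1)] g(2) LC_eq by metis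
qed

lemma Th_bij:
  assumes A: "SL_int A"
  shows "bij_betw (Th A) (carrier (pi1_mapping_torus A)) (int_lattice \<times> UNIV)"
  unfolding bij_betw_def
proof (intro conjI)
  show "inj_on (Th A) (carrier (pi1_mapping_torus A))"
  proof (rule inj_onI)
    fix C D assume C: "C \<in> carrier (pi1_mapping_torus A)" and D: "D \<in> carrier (pi1_mapping_torus A)"
      and eq: "Th A C = Th A D"
    obtain g h where g: "g \<in> LOOPS A" "C = LC A g" and h: "h \<in> LOOPS A" "D = LC A h"
      using C D by (auto simp: carrier_pi1)
    have "lendi A g = lendi A h" using eq Th_LC[OF A g(1)] Th_LC[OF A h(1)] g h by simp
    then have "lend A g = lend A h" using lendi_lend[OF A g(1)] lendi_lend[OF A h(1)] by metis
    then have "LH A g h" by (rule lend_inj[OF A g(1) h(1)])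
    then show "C = D" using g h LC_eq by simp
  qed
  show "Th A ` carrier (pi1_mapping_torus A) = int_lattice \<times> UNIV"
  proof (intro subset_antisym subsetI)
    fix x assume "x \<in> Th A ` carrier (pi1_mapping_torus A)"
    then obtain g where "g \<in> LOOPS A" "x = Th A (LC A g)" by (auto simp: carrier_pi1)
    then show "x \<in> int_lattice \<times> UNIV" using Th_LC[OF A] lendi_lend(2)[OF A] by simp
  next
    fix x assume x: "x \<in> (int_lattice :: (real^'a) set) \<times> (UNIV :: int set)"
    obtain v m where xe: "x = (v, m)" "v \<in> int_lattice" using x by auto
    obtain g where g: "g \<in> LOOPS A" "lend A g = (v, of_int m)" using lend_surj[OF A xe(2)] by blast
    have "Th A (LC A g) = x" using Th_LC[OF A g(1)] g(2) xe by (simp add: lendi_def)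
    moreover have "LC A g \<in> carrier (pi1_mapping_torus A)" using g(1) by (simp add: carrier_pi1)
    ultimately show "x \<in> Th A ` carrier (pi1_mapping_torus A)" by blast
  qed
qed

lemma mult_closed:
  assumes C: "C \<in> carrier (pi1_mapping_torus A)" and D: "D \<in> carrier (pi1_mapping_torus A)"
  shows "mult (pi1_mapping_torus A) C D \<in> carrier (pi1_mapping_torus A)"
  using path_join_loop[OF carrier_some(1)[OF C] carrier_some(1)[OF D]]
  by (simp add: mult_pi1 carrier_pi1)

lemma Th_mult:
  assumes A: "SL_int A" and C: "C \<in> carrier (pi1_mapping_torus A)" and D: "D \<in> carrier (pi1_mapping_torus A)"
  shows "Th A (mult (pi1_mapping_torus A) C D) = opA A (Th A C) (Th A D)"
proof -
  define g where "g = (SOME g. g \<in> C)"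
  define h where "h = (SOME g. g \<in> D)"
  have g: "g \<in> LOOPS A" and h: "h \<in> LOOPS A" using carrier_some[OF C] carrier_some[OF D] by (simp_all add: g_def h_def)
  have ThC: "Th A C = lendi A g" and ThD: "Th A D = lendi A h" by (simp_all add: Th_def g_def h_def)
  obtain v m where vm: "lendi A g = (v, m)" by fastforce
  obtain v' m' where vm': "lendi A h = (v', m')" by fastforce
  have lg: "lend A g = (v, of_int m)" "v \<in> int_lattice" using lendi_lend[OF A g] vm by auto
  have lh: "lend A h = (v', of_int m')" using lendi_lend[OF A h] vm' by auto
  have "Th A (mult (pi1_mapping_torus A) C D) = lendi A (path_join g h)"
    unfolding mult_pi1 g_def[symmetric] h_def[symmetric] by (rule Th_LC[OF A path_join_loop[OF g h]])
  also have "\<dots> = (fst (deck A (v, m) (lend A h)), \<lfloor>snd (deck A (v, m) (lend A h))\<rfloor>)"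
    unfolding lendi_def lend_join[OF A g h lg(2) lg(1)] ..
  also have "\<dots> = opA A (Th A C) (Th A D)"
    unfolding ThC ThD vm vm' lh by (simp add: deck_def opA_def add.commute)
  finally show ?thesis .
qed

theorem pi1_transfer:
  fixes A B :: "int^'n^'n"
  assumes A: "SL_int A" and B: "SL_int B" and iso: "pi1_mapping_torus A \<cong> pi1_mapping_torus B"
  shows "\<exists>Psi. bij_betw Psi (int_lattice \<times> UNIV) (int_lattice \<times> UNIV) \<and>
          (\<forall>x\<in>int_lattice \<times> UNIV. \<forall>y\<in>int_lattice \<times> UNIV. Psi (opA A x y) = opA B (Psi x) (Psi y))"
proof -
  obtain psi where psi: "psi \<in> hom (pi1_mapping_torus A) (pi1_mapping_torus B)"
    "bij_betw psi (carrier (pi1_mapping_torus A)) (carrier (pi1_mapping_torus B))"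
    using iso unfolding is_iso_def iso_def by blast
  define I where "I = inv_into (carrier (pi1_mapping_torus A)) (Th A)"
  define Psi where "Psi = Th B \<circ> (psi \<circ> I)"
  have bI: "bij_betw I (int_lattice \<times> UNIV) (carrier (pi1_mapping_torus A))"
    unfolding I_def by (rule bij_betw_inv_into[OF Th_bij[OF A]])
  have "bij_betw Psi (int_lattice \<times> UNIV) (int_lattice \<times> UNIV)"
    unfolding Psi_def by (rule bij_betw_trans[OF bij_betw_trans[OF bI psi(2)] Th_bij[OF B]])
  moreover have "Psi (opA A x y) = opA B (Psi x) (Psi y)"
    if x: "x \<in> int_lattice \<times> UNIV" and y: "y \<in> int_lattice \<times> UNIV" for x y
  proof -
    have Ix: "I x \<in> carrier (pi1_mapping_torus A)" and Iy: "I y \<in> carrier (pi1_mapping_torus A)"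
      using bI x y by (auto simp: bij_betw_def)
    have ThI: "Th A (I x) = x" "Th A (I y) = y"
      using x y Th_bij[OF A] unfolding I_def bij_betw_def by (auto intro: f_inv_into_f)
    have "opA A x y = Th A (mult (pi1_mapping_torus A) (I x) (I y))"
      using Th_mult[OF A Ix Iy] ThI by simp
    moreover have injA: "inj_on (Th A) (carrier (pi1_mapping_torus A))" using Th_bij[OF A] by (simp add: bij_betw_def)
    ultimately have "I (opA A x y) = mult (pi1_mapping_torus A) (I x) (I y)"
      unfolding I_def using mult_closed[OF Ix Iy] by (simp add: I_def)
    then have "Psi (opA A x y) = Th B (psi (mult (pi1_mapping_torus A) (I x) (I y)))"
      by (simp add: Psi_def)
    also have "\<dots> = Th B (mult (pi1_mapping_torus B) (psi (I x)) (psi (I y)))"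
      using psi(1) Ix Iy by (simp add: hom_def)
    also have "\<dots> = opA B (Th B (psi (I x))) (Th B (psi (I y)))"
      using Th_mult[OF B] psi(1) Ix Iy by (simp add: hom_def Pi_iff)
    finally show ?thesis by (simp add: Psi_def)
  qed
  ultimately show ?thesis by blast
qed

lemma mat_eq_axis:
  fixes A B :: "real^'n^'m"
  assumes "\<And>j. A *v axis j 1 = B *v axis j 1"
  shows "A = B"
proof -
  have "column j A = column j B" for j using assms[of j] by (simp add: matrix_vector_mult_basis)
  then have "A $ i $ j = B $ i $ j" for i j by (metis column_def vec_lambda_beta)
  then show ?thesis by (simp add: vec_eq_iff)
qed

lemma noeig_det:
  assumes A: "SL_int A" and ne: "\<not> has_eigenvalue_one A"
  shows "det (Ainv A - mat 1) \<noteq> 0"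
proof
  assume d: "det (Ainv A - mat 1) = 0"
  let ?M = "Ainv A - mat 1"
  have "\<not> inj ((*v) ?M)"
    using d det_nz_iff_inj[of "\<lambda>x. ?M *v x"] by simp
  then obtain x y where xy: "x \<noteq> y" "?M *v x = ?M *v y" unfolding inj_def by blast
  define z where "z = x - y"
  have z0: "z \<noteq> 0" using xy(1) by (simp add: z_def)
  have "?M *v z = 0" using xy(2) by (simp add: z_def matrix_vector_mult_diff_distrib)
  then have "Ainv A *v z = z" by (simp add: matrix_vector_mult_diff_rdistrib)
  then have "real_mat A *v (Ainv A *v z) = real_mat A *v z" by simp
  then have Rz: "real_mat A *v z = z" by (simp add: matrix_vector_mul_assoc SL_inv[OF A])
  define zc where "zc = (\<chi> i. complex_of_real (z $ i))"
  have "zc \<noteq> 0" using z0 by (simp add: zc_def vec_eq_iff)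
  moreover have "complex_mat A *v zc = zc"
  proof -
    have "(complex_mat A *v zc) $ i = complex_of_real ((real_mat A *v z) $ i)" for i
      by (simp add: complex_mat_def real_mat_def matrix_vector_mult_def zc_def)
    then show ?thesis using Rz by (simp add: vec_eq_iff zc_def)
  qed
  ultimately show False using ne unfolding has_eigenvalue_one_def by blast
qed


lemma sum_axis: "(\<Sum>j\<in>UNIV. (v $ j) *s axis j (1::real)) = (v :: real^'n)"
proof -
  have "column j (mat 1 :: real^'n^'n) = axis j 1" for j
    by (simp add: column_def mat_def axis_def vec_eq_iff)
  then show ?thesis using matrix_mult_sum[of "mat 1 :: real^'n^'n" v] by simp
qed

lemma additive_int_scale:
  assumes add: "\<And>x y. x \<in> int_lattice \<Longrightarrow> y \<in> int_lattice \<Longrightarrow> F (x + y) = F x + F y"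
    and v: "(v :: real^'n) \<in> int_lattice"
  shows "F (of_int k *s v) = (of_int k *s F v :: real^'m)"
proof -
  have F0: "F 0 = 0" using add[OF lat_zero lat_zero] by simp
  have nat: "F (of_nat n *s v) = of_nat n *s F v" for n
  proof (induction n)
    case 0 then show ?case by (simp add: F0)
  next
    case (Suc n)
    have "of_nat (Suc n) *s v = of_nat n *s v + v" by (simp add: vector_sadd_rdistrib)
    moreover have "of_nat n *s v \<in> int_lattice" by (rule lat_scale) (use v in auto)
    ultimately have "F (of_nat (Suc n) *s v) = F (of_nat n *s v) + F v" using add v by simp
    then show ?case using Suc by (simp add: vector_sadd_rdistrib)
  qed
  show ?thesis
  proof (cases "0 \<le> k")
    case True then show ?thesis using nat[of "nat k"] by simp
  next
    case False
    define n where "n = nat (- k)"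
    have k: "of_int k = - (of_nat n :: real)" using False by (simp add: n_def)
    have l: "of_nat n *s v \<in> int_lattice" by (rule lat_scale) (use v in auto)
    have "F (of_nat n *s v + - (of_nat n) *s v) = F (of_nat n *s v) + F (- (of_nat n) *s v)"
      by (rule add[OF l]) (rule lat_scale, use v in auto)
    then have "F (- (of_nat n) *s v) = - F (of_nat n *s v)"
      by (simp add: F0 vector_sadd_rdistrib[symmetric] eq_neg_iff_add_eq_0 add.commute)
    then show ?thesis using nat[of n] k by (simp add: vector_smult_lneg)
  qed
qed

lemma additive_matrix:
  assumes add: "\<And>x y. x \<in> int_lattice \<Longrightarrow> y \<in> int_lattice \<Longrightarrow> F (x + y) = F x + F y"
  shows "\<exists>M :: real^'n^'m. \<forall>v\<in>(int_lattice :: (real^'n) set). M *v v = F v"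
proof -
  define M :: "real^'n^'m" where "M = (\<chi> i j. F (axis j (1::real) :: real^'n) $ i)"
  have F0: "F 0 = 0" using add[OF lat_zero lat_zero] by simp
  have Fsum: "F (\<Sum>j\<in>S. g j) = (\<Sum>j\<in>S. F (g j))" if "finite S" "\<And>j. g j \<in> int_lattice" for S and g :: "'n \<Rightarrow> real^'n"
    using that(1)
  proof (induction S rule: finite_induct)
    case empty then show ?case by (simp add: F0)
  next
    case (insert j S)
    have "(\<Sum>j\<in>S. g j) \<in> int_lattice"
      using that(2) by (induction S rule: infinite_finite_induct) (auto intro: lat_add lat_zero)
    then show ?case using insert add that(2) by simp
  qed
  have "M *v v = F v" if v: "v \<in> int_lattice" for v
  proof -
    have vi: "v $ j \<in> \<int>" for j using v by (simp add: lat_iff)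
    have "M *v v = (\<Sum>j\<in>UNIV. (v $ j) *s column j M)" by (rule matrix_mult_sum)
    also have "\<dots> = (\<Sum>j\<in>UNIV. (v $ j) *s F (axis j 1))"
      by (simp add: column_def M_def)
    also have "\<dots> = (\<Sum>j\<in>UNIV. F ((v $ j) *s axis j 1))"
    proof (rule sum.cong[OF refl])
      fix j
      obtain k where "v $ j = of_int k" using vi[of j] by (auto elim: Ints_cases)
      then show "(v $ j) *s F (axis j 1) = F ((v $ j) *s axis j 1)"
        using additive_int_scale[OF add lat_axis, of k] by simp
    qed
    also have "\<dots> = F (\<Sum>j\<in>UNIV. (v $ j) *s axis j 1)"
      by (rule Fsum[symmetric]) (auto intro: lat_scale vi lat_axis)
    also have "\<dots> = F v" by (simp add: sum_axis)
    finally show ?thesis .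
  qed
  then show ?thesis by blast
qed


lemma opA_simp: "opA A (v, m) (v', m') = (zpow A (- m) *v v' + v, m + m')"
  by (simp add: opA_def)

lemma zpow_neg0: "zpow A (- 0) = mat 1" by simp

lemma group_core:
  fixes A B :: "int^'n^'n"
  assumes A: "SL_int A" and B: "SL_int B" and neA: "\<not> has_eigenvalue_one A"
    and bij: "bij_betw Psi (int_lattice \<times> UNIV) (int_lattice \<times> UNIV)"
    and hom: "\<And>x y. x \<in> int_lattice \<times> UNIV \<Longrightarrow> y \<in> int_lattice \<times> UNIV \<Longrightarrow> Psi (opA A x y) = opA B (Psi x) (Psi y)"
  shows "\<exists>P Q :: real^'n^'n. P ** Q = mat 1 \<and> Q ** P = mat 1 \<and>
           (real_mat B = P ** real_mat A ** Q \<or> real_mat B = P ** Ainv A ** Q)"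
proof -
  let ?F = "(int_lattice :: (real^'n) set) \<times> (UNIV :: int set)"
  have PsiF: "Psi x \<in> ?F" if "x \<in> ?F" for x using bij that by (auto simp: bij_betw_def)
  define h where "h = (\<lambda>x. snd (Psi x))"
  have hh: "h (opA A x y) = h x + h y" if "x \<in> ?F" "y \<in> ?F" for x y
    using hom[OF that] by (simp add: h_def opA_def)
  have Fv: "(v, m) \<in> ?F" if "v \<in> int_lattice" for v m using that by simp
  have h00: "h (0, 0) = 0"
  proof -
    have "h (opA A (0,0) (0,0)) = h (0,0) + h (0,0)" by (rule hh) (simp_all add: lat_zero)
    then show ?thesis by (simp add: opA_simp)
  qed
  \<comment> \<open>The lattice part is killed by h\<close>
  have hscale: "h (of_nat k *s v, 0) = of_nat k * h (v, 0)" if v: "v \<in> int_lattice" for k v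
  proof (induction k)
    case 0 then show ?case by (simp add: h00)
  next
    case (Suc k)
    have l: "of_nat k *s v \<in> int_lattice" by (rule lat_scale) (use v in auto)
    have e: "opA A (v, 0) (of_nat k *s v, 0) = (of_nat (Suc k) *s v, 0)"
      by (simp add: opA_simp vector_sadd_rdistrib add.commute)
    have "h (opA A (v, 0) (of_nat k *s v, 0)) = h (v, 0) + h (of_nat k *s v, 0)"
      by (rule hh) (simp_all add: v l)
    then have "h (of_nat (Suc k) *s v, 0) = h (v, 0) + h (of_nat k *s v, 0)"
      by (simp only: e)
    then show ?case using Suc by (simp add: algebra_simps)
  qed
  have hN: "h (v, 0) = 0" if v: "v \<in> int_lattice" for v
  proof -
    let ?M = "Ainv A - mat 1"
    have iM: "intmat ?M" by (intro intmat_diff intmat_Ainv[OF A] intmat_one)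
    have dM: "det ?M \<noteq> 0" by (rule noeig_det[OF A neA])
    obtain u where u: "u \<in> int_lattice" "?M *v u = det ?M *s v" using cramer_int[OF iM dM v] by blast
    obtain k where k: "det ?M = of_int k" using det_Ints[OF iM] by (auto elim: Ints_cases)
    have k0: "k \<noteq> 0" using dM k by simp
    define n where "n = nat \<bar>k\<bar>"
    have n1: "n \<ge> 1" using k0 by (simp add: n_def)
    define u' where "u' = (if 0 < k then u else - u)"
    have u'L: "u' \<in> int_lattice" using u(1) by (simp add: u'_def lat_neg)
    have Mu': "?M *v u' = of_nat n *s v"
    proof (cases "0 < k")
      case True
      then show ?thesis using u(2) k by (simp add: u'_def n_def)
    next
      case False
      then have "of_nat n = - (of_int k :: real)" using k0 by (simp add: n_def)
      moreover have "?M *v u' = - (?M *v u)" using False by (simp add: u'_def mv_neg)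
      ultimately show ?thesis using u(2) k by (simp add: vector_smult_lneg)
    qed
    have nvL: "of_nat n *s v \<in> int_lattice" by (rule lat_scale) (use v in auto)
    have "Ainv A *v u' = u' + of_nat n *s v"
      using Mu' by (simp add: matrix_vector_mult_diff_rdistrib algebra_simps)
    then have key: "opA A (0, 1) (u', 0) = opA A (of_nat n *s v, 0) (opA A (u', 0) (0, 1))"
      by (simp add: opA_simp zpow_m1 add.commute)
    have zu: "opA A (u', 0) (0, 1) = (u', 1)" by (simp add: opA_simp)
    have "h (opA A (0, 1) (u', 0)) = h (0, 1) + h (u', 0)"
      by (rule hh) (simp_all add: lat_zero u'L)
    moreover have "h (opA A (of_nat n *s v, 0) (opA A (u', 0) (0, 1))) = h (of_nat n *s v, 0) + h (opA A (u', 0) (0, 1))"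
      by (rule hh) (simp_all add: nvL u'L zu)
    moreover have "h (opA A (u', 0) (0, 1)) = h (u', 0) + h (0, 1)"
      by (rule hh) (simp_all add: lat_zero u'L)
    ultimately have "h (0, 1) + h (u', 0) = h (of_nat n *s v, 0) + (h (u', 0) + h (0, 1))"
      using key by simp
    then have "of_nat n * h (v, 0) = 0" using hscale[OF v] by simp
    then show ?thesis using n1 by simp
  qed
  define eps where "eps = h (0, 1)"
  have step: "opA A (0, 1) (0, m) = (0, m + 1)" for m by (simp add: opA_simp add.commute)
  have h0m: "h (0, m) = m * eps" for m
  proof (induction m rule: int_induct[where k=0])
    case base then show ?case by (simp add: h00)
  next
    case (step1 i)
    have "h (opA A (0, 1) (0, i)) = h (0, 1) + h (0, i)" by (rule hh) (simp_all add: lat_zero)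
    then show ?case using step1 step[of i] by (simp add: eps_def algebra_simps)
  next
    case (step2 i)
    have "h (opA A (0, 1) (0, i - 1)) = h (0, 1) + h (0, i - 1)" by (rule hh) (simp_all add: lat_zero)
    then show ?case using step2 step[of "i - 1"] by (simp add: eps_def algebra_simps)
  qed
  have hvm: "h (v, m) = m * eps" if v: "v \<in> int_lattice" for v m
  proof -
    have "opA A (v, 0) (0, m) = (v, m)" by (simp add: opA_simp)
    moreover have "h (opA A (v, 0) (0, m)) = h (v, 0) + h (0, m)" by (rule hh) (simp_all add: v lat_zero)
    ultimately show ?thesis using hN[OF v] h0m by simp
  qed
  have eps1: "eps = 1 \<or> eps = -1"
  proof -
    have "(0, 1) \<in> Psi ` ?F" using bij lat_zero by (auto simp: bij_betw_def)
    then obtain v m where vm: "v \<in> int_lattice" "Psi (v, m) = (0, 1)" by auto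
    then have "m * eps = 1" using hvm[OF vm(1), of m] by (simp add: h_def)
    then show ?thesis by (auto simp: zmult_eq_1_iff)
  qed
  define P where "P = (\<lambda>v. fst (Psi (v, 0)))"
  have PsiN: "Psi (v, 0) = (P v, 0)" "P v \<in> int_lattice" if v: "v \<in> int_lattice" for v
  proof -
    have "snd (Psi (v, 0)) = 0" using hN[OF v] by (simp add: h_def)
    moreover have "Psi (v, 0) \<in> ?F" by (rule PsiF) (simp add: v)
    ultimately show "Psi (v, 0) = (P v, 0)" "P v \<in> int_lattice" by (auto simp: P_def prod_eq_iff)
  qed
  have Padd: "P (x + y) = P x + P y" if "x \<in> int_lattice" "y \<in> int_lattice" for x y
  proof -
    have "Psi (opA A (x, 0) (y, 0)) = opA B (Psi (x, 0)) (Psi (y, 0))" by (rule hom) (simp_all add: that)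
    then have "Psi (y + x, 0) = (P y + P x, 0)" using PsiN that by (simp add: opA_simp)
    then have "Psi (x + y, 0) = (P y + P x, 0)" by (simp add: add.commute)
    moreover have "Psi (x + y, 0) = (P (x + y), 0)" using PsiN(1)[OF lat_add[OF that]] .
    ultimately show ?thesis by (simp add: add.commute)
  qed
  have Pinj: "inj_on P int_lattice"
  proof (rule inj_onI)
    fix x y assume xy: "x \<in> int_lattice" "y \<in> int_lattice" "P x = P y"
    then have "Psi (x, 0) = Psi (y, 0)" using PsiN by simp
    then show "x = y" using bij xy unfolding bij_betw_def inj_on_def by auto
  qed
  have Psurj: "P ` int_lattice = int_lattice"
  proof (intro subset_antisym subsetI)
    fix u assume "u \<in> P ` int_lattice" then show "u \<in> int_lattice" using PsiN by auto
  next
    fix u :: "real^'n" assume u: "u \<in> int_lattice"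
    then have "(u, 0) \<in> Psi ` ?F" using bij by (auto simp: bij_betw_def)
    then obtain v m where vm: "v \<in> int_lattice" "Psi (v, m) = (u, 0)" by auto
    then have "m * eps = 0" using hvm[OF vm(1), of m] by (simp add: h_def)
    then have "m = 0" using eps1 by auto
    then show "u \<in> P ` int_lattice" using vm PsiN by force
  qed
  define Qf where "Qf = inv_into int_lattice P"
  have Qf: "Qf u \<in> int_lattice" "P (Qf u) = u" if "u \<in> int_lattice" for u
    using that Psurj unfolding Qf_def by (auto intro: inv_into_into f_inv_into_f)
  have QfP: "Qf (P v) = v" if "v \<in> int_lattice" for v
    using that Pinj unfolding Qf_def by simp
  have Qadd: "Qf (x + y) = Qf x + Qf y" if "x \<in> int_lattice" "y \<in> int_lattice" for x y
  proof -
    have "P (Qf x + Qf y) = x + y" using Padd Qf that by simp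
    then have "Qf (x + y) = Qf (P (Qf x + Qf y))" by simp
    also have "\<dots> = Qf x + Qf y" by (rule QfP[OF lat_add[OF Qf(1)[OF that(1)] Qf(1)[OF that(2)]]])
    finally show ?thesis .
  qed
  obtain Pm :: "real^'n^'n" where Pm: "\<And>v. v \<in> int_lattice \<Longrightarrow> Pm *v v = P v"
    using additive_matrix[of P] Padd by blast
  obtain Qm :: "real^'n^'n" where Qm: "\<And>v. v \<in> int_lattice \<Longrightarrow> Qm *v v = Qf v"
    using additive_matrix[of Qf] Qadd by blast
  have PQ: "Pm ** Qm = mat 1"
    by (rule mat_eq_axis) (simp add: matrix_vector_mul_assoc[symmetric] Qm lat_axis Pm Qf)
  have QP: "Qm ** Pm = mat 1"
    by (rule mat_eq_axis) (simp add: matrix_vector_mul_assoc[symmetric] Pm lat_axis Qm PsiN QfP)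
  obtain w where w: "Psi (0, 1) = (w, eps)" "w \<in> int_lattice"
    using PsiF[of "(0, 1)"] lat_zero by (cases "Psi (0, 1)") (auto simp: eps_def h_def)
  have rel: "zpow B (- eps) *v P v = P (Ainv A *v v)" if v: "v \<in> int_lattice" for v
  proof -
    have Av: "Ainv A *v v \<in> int_lattice" by (rule lat_mat[OF intmat_Ainv[OF A] v])
    have e: "opA A (0, 1) (v, 0) = opA A (Ainv A *v v, 0) (0, 1)"
      by (simp add: opA_simp zpow_m1)
    have "Psi (opA A (0, 1) (v, 0)) = opA B (Psi (0, 1)) (Psi (v, 0))" by (rule hom) (simp_all add: v lat_zero)
    moreover have "Psi (opA A (Ainv A *v v, 0) (0, 1)) = opA B (Psi (Ainv A *v v, 0)) (Psi (0, 1))"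
      by (rule hom) (simp_all add: Av lat_zero)
    ultimately have "opA B (w, eps) (P v, 0) = opA B (P (Ainv A *v v), 0) (w, eps)"
      using e w PsiN[OF v] PsiN[OF Av] by simp
    then show ?thesis by (simp add: opA_simp add.commute)
  qed
  have relM: "zpow B (- eps) ** Pm = Pm ** Ainv A"
  proof (rule mat_eq_axis)
    fix j
    have Aj: "Ainv A *v axis j 1 \<in> int_lattice" by (rule lat_mat[OF intmat_Ainv[OF A] lat_axis])
    show "(zpow B (- eps) ** Pm) *v axis j 1 = (Pm ** Ainv A) *v axis j 1"
      by (simp add: matrix_vector_mul_assoc[symmetric] Pm lat_axis Aj rel)
  qed
  show ?thesis
  proof (cases "eps = 1")
    case True
    then have r: "Ainv B ** Pm = Pm ** Ainv A" using relM by (simp add: zpow_m1)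
    have "Pm ** real_mat A = (real_mat B ** Ainv B) ** Pm ** real_mat A" by (simp add: SL_inv[OF B])
    also have "\<dots> = real_mat B ** (Ainv B ** Pm) ** real_mat A" by (simp only: matrix_mul_assoc)
    also have "\<dots> = real_mat B ** (Pm ** Ainv A) ** real_mat A" by (simp only: r)
    also have "\<dots> = real_mat B ** Pm ** (Ainv A ** real_mat A)" by (simp only: matrix_mul_assoc)
    also have "\<dots> = real_mat B ** Pm" by (simp add: SL_inv[OF A])
    finally have "Pm ** real_mat A = real_mat B ** Pm" .
    then have "real_mat B = Pm ** real_mat A ** Qm"
      by (metis PQ matrix_mul_assoc matrix_mul_rid)
    then show ?thesis using PQ QP by blast
  next
    case False
    then have "eps = -1" using eps1 by simp
    then have "real_mat B ** Pm = Pm ** Ainv A" using relM by (simp add: zpow_1)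
    then have "real_mat B = Pm ** Ainv A ** Qm"
      by (metis PQ matrix_mul_assoc matrix_mul_rid)
    then show ?thesis using PQ QP by blast
  qed
qed

section \<open>Complex matrices and diagonalizability\<close>

definition cm :: "real^'n^'m \<Rightarrow> complex^'n^'m" where
  "cm M = (\<chi> i j. complex_of_real (M $ i $ j))"

lemma cm_mult: "cm ((M :: real^'n^'m) ** (N :: real^'k^'n)) = cm M ** cm N"
  by (simp add: cm_def matrix_matrix_mult_def vec_eq_iff of_real_sum)

lemma cm_one: "cm (mat 1 :: real^'n^'n) = mat 1"
  by (simp add: cm_def mat_def vec_eq_iff)

lemma complex_mat_cm: "complex_mat A = cm (real_mat A)"
  by (simp add: complex_mat_def cm_def real_mat_def vec_eq_iff)

lemma inv_unique:
  fixes M N :: "complex^'n^'n"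
  assumes "M ** N = mat 1" "N ** M = mat 1"
  shows "invertible M" "matrix_inv M = N"
proof -
  show inv: "invertible M" using assms unfolding invertible_def by blast
  have "M ** matrix_inv M = mat 1 \<and> matrix_inv M ** M = mat 1"
    using inv unfolding invertible_def matrix_inv_def by (rule someI_ex)
  then have "matrix_inv M = matrix_inv M ** (M ** N)" using assms by simp
  also have "\<dots> = (matrix_inv M ** M) ** N" by (simp add: matrix_mul_assoc)
  also have "\<dots> = N" using \<open>M ** matrix_inv M = mat 1 \<and> matrix_inv M ** M = mat 1\<close> by simp
  finally show "matrix_inv M = N" .
qed

lemma diag_mult_left:
  fixes D X :: "complex^'n^'n"
  assumes "\<forall>i j. i \<noteq> j \<longrightarrow> D $ i $ j = 0"
  shows "(D ** X) $ i $ j = D $ i $ i * X $ i $ j"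
proof -
  have "(D ** X) $ i $ j = (\<Sum>k\<in>UNIV. D $ i $ k * X $ k $ j)" by (simp add: matrix_matrix_mult_def)
  also have "\<dots> = (\<Sum>k\<in>UNIV. if k = i then D $ i $ i * X $ i $ j else 0)"
    by (rule sum.cong) (use assms in auto)
  finally show ?thesis by simp
qed

lemma diag_mult_right:
  fixes D X :: "complex^'n^'n"
  assumes "\<forall>i j. i \<noteq> j \<longrightarrow> D $ i $ j = 0"
  shows "(X ** D) $ i $ j = X $ i $ j * D $ j $ j"
proof -
  have "(X ** D) $ i $ j = (\<Sum>k\<in>UNIV. X $ i $ k * D $ k $ j)" by (simp add: matrix_matrix_mult_def)
  also have "\<dots> = (\<Sum>k\<in>UNIV. if k = j then X $ i $ j * D $ j $ j else 0)"
    by (rule sum.cong) (use assms in auto)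
  finally show ?thesis by simp
qed

lemma diag_conj:
  fixes B :: "int^'n^'n" and P' D0 N' :: "complex^'n^'n"
  assumes "complex_mat B = P' ** D0 ** N'" "P' ** N' = mat 1" "N' ** P' = mat 1"
    and "\<forall>i j. i \<noteq> j \<longrightarrow> D0 $ i $ j = 0"
  shows "diagonalizable_over_C B"
  unfolding diagonalizable_over_C_def using inv_unique[OF assms(2,3)] assms(1,4) by metis

lemma cm_Ainv:
  assumes A: "SL_int A"
  shows "complex_mat A ** cm (Ainv A) = mat 1" "cm (Ainv A) ** complex_mat A = mat 1"
  by (simp_all add: complex_mat_cm cm_mult[symmetric] SL_inv[OF A] cm_one)

lemma two_inverses:
  fixes M X Y :: "complex^'n^'n"
  assumes "M ** X = mat 1" "Y ** M = mat 1"
  shows "Y = X"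
proof -
  have "Y = Y ** (M ** X)" using assms by simp
  also have "\<dots> = (Y ** M) ** X" by (simp add: matrix_mul_assoc)
  finally show ?thesis using assms by simp
qed

lemma diag_Ainv:
  fixes A :: "int^'n^'n"
  assumes A: "SL_int A" and dA: "diagonalizable_over_C A"
  shows "\<exists>Pc Pv D' :: complex^'n^'n. Pc ** Pv = mat 1 \<and> Pv ** Pc = mat 1 \<and> (\<forall>i j. i \<noteq> j \<longrightarrow> D' $ i $ j = 0) \<and>
            cm (Ainv A) = Pc ** D' ** Pv"
proof -
  obtain Pc D :: "complex^'n^'n" where Pc: "invertible Pc" and D: "\<forall>i j. i \<noteq> j \<longrightarrow> D $ i $ j = 0"
    and cA: "complex_mat A = Pc ** D ** matrix_inv Pc"
    using dA unfolding diagonalizable_over_C_def by blast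
  define Pv where "Pv = matrix_inv Pc"
  have PP: "Pc ** Pv = mat 1" "Pv ** Pc = mat 1"
    using someI_ex[OF Pc[unfolded invertible_def]] unfolding Pv_def matrix_inv_def by auto
  define X where "X = Pv ** cm (Ainv A) ** Pc"
  have DX: "D ** X = mat 1"
  proof -
    have "Pv ** complex_mat A ** Pc = (Pv ** Pc) ** D ** (Pv ** Pc)"
      unfolding cA Pv_def[symmetric] by (simp only: matrix_mul_assoc)
    then have "D = Pv ** complex_mat A ** Pc" using PP by simp
    then have "D ** X = Pv ** complex_mat A ** (Pc ** Pv) ** cm (Ainv A) ** Pc"
      by (simp only: X_def matrix_mul_assoc)
    also have "\<dots> = Pv ** (complex_mat A ** cm (Ainv A)) ** Pc"
      by (simp only: PP matrix_mul_rid matrix_mul_assoc)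
    also have "\<dots> = mat 1" using PP cm_Ainv[OF A] by simp
    finally show ?thesis .
  qed
  have Dnz: "D $ i $ i \<noteq> 0" for i
  proof
    assume "D $ i $ i = 0"
    then have "(D ** X) $ i $ i = 0" using diag_mult_left[OF D] by simp
    then show False using DX by (simp add: mat_def)
  qed
  define D' :: "complex^'n^'n" where "D' = (\<chi> i j. if i = j then inverse (D $ i $ i) else 0)"
  have D': "\<forall>i j. i \<noteq> j \<longrightarrow> D' $ i $ j = 0" by (simp add: D'_def)
  have DD': "D ** D' = mat 1"
    by (simp add: vec_eq_iff diag_mult_left[OF D] D'_def mat_def Dnz)
  have D'D: "D' ** D = mat 1"
    by (simp add: vec_eq_iff diag_mult_right[OF D] D'_def mat_def Dnz)
  have "complex_mat A ** (Pc ** D' ** Pv) = Pc ** (D ** (Pv ** Pc) ** D') ** Pv"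
    by (simp add: cA Pv_def[symmetric] matrix_mul_assoc)
  also have "\<dots> = mat 1" by (simp add: PP DD')
  finally have "cm (Ainv A) = Pc ** D' ** Pv"
    using two_inverses[of "complex_mat A" "Pc ** D' ** Pv" "cm (Ainv A)"] cm_Ainv[OF A] by simp
  then show ?thesis using PP D' by blast
qed

lemma diag_transfer:
  fixes A B :: "int^'n^'n" and P Q X :: "real^'n^'n" and Pc D Pv :: "complex^'n^'n"
  assumes PQ: "P ** Q = mat 1" "Q ** P = mat 1"
    and B: "real_mat B = P ** X ** Q"
    and X: "cm X = Pc ** D ** Pv" "Pc ** Pv = mat 1" "Pv ** Pc = mat 1" "\<forall>i j. i \<noteq> j \<longrightarrow> D $ i $ j = 0"
  shows "diagonalizable_over_C B"
proof (rule diag_conj)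
  show "complex_mat B = (cm P ** Pc) ** D ** (Pv ** cm Q)"
    by (simp add: complex_mat_cm B cm_mult X(1) matrix_mul_assoc)
  have cPQ: "cm P ** cm Q = mat 1" "cm Q ** cm P = mat 1"
    using PQ by (simp_all add: cm_mult[symmetric] cm_one)
  show "(cm P ** Pc) ** (Pv ** cm Q) = mat 1"
  proof -
    have "(cm P ** Pc) ** (Pv ** cm Q) = cm P ** (Pc ** Pv) ** cm Q" by (simp add: matrix_mul_assoc)
    then show ?thesis using X(2) cPQ by simp
  qed
  show "(Pv ** cm Q) ** (cm P ** Pc) = mat 1"
  proof -
    have "(Pv ** cm Q) ** (cm P ** Pc) = Pv ** (cm Q ** cm P) ** Pc" by (simp add: matrix_mul_assoc)
    then show ?thesis using X(3) cPQ by simp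
  qed
  show "\<forall>i j. i \<noteq> j \<longrightarrow> D $ i $ j = 0" by (rule X(4))
qed

lemma diag_transfer':
  fixes A B :: "int^'n^'n" and P Q X :: "real^'n^'n"
  assumes PQ: "P ** Q = mat 1" "Q ** P = mat 1"
    and B: "real_mat B = P ** X ** Q"
    and ex: "\<exists>Pc Pv D :: complex^'n^'n. Pc ** Pv = mat 1 \<and> Pv ** Pc = mat 1 \<and> (\<forall>i j. i \<noteq> j \<longrightarrow> D $ i $ j = 0) \<and>
            cm X = Pc ** D ** Pv"
  shows "diagonalizable_over_C B"
proof -
  from ex obtain Pc Pv D :: "complex^'n^'n" where X: "Pc ** Pv = mat 1" "Pv ** Pc = mat 1"
    "\<forall>i j. i \<noteq> j \<longrightarrow> D $ i $ j = 0" "cm X = Pc ** D ** Pv" by blast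
  show ?thesis by (rule diag_transfer[OF PQ B X(4) X(1) X(2) X(3)])
qed

theorem corollary3p3:
  fixes A B :: "int^'n^'n"
  assumes "SL_int A" and "SL_int B"
    and "\<not> has_eigenvalue_one A" and "\<not> has_eigenvalue_one B"
    and "pi1_mapping_torus A \<cong> pi1_mapping_torus B"
    and "diagonalizable_over_C A"
  shows "diagonalizable_over_C B"
proof -
  obtain Psi where Psi: "bij_betw Psi (int_lattice \<times> UNIV) (int_lattice \<times> UNIV)"
    "\<forall>x\<in>int_lattice \<times> UNIV. \<forall>y\<in>int_lattice \<times> UNIV. Psi (opA A x y) = opA B (Psi x) (Psi y)"
    using pi1_transfer[OF assms(1,2,5)] by blast
  obtain P Q :: "real^'n^'n" where PQ: "P ** Q = mat 1" "Q ** P = mat 1"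
    and cases: "real_mat B = P ** real_mat A ** Q \<or> real_mat B = P ** Ainv A ** Q"
    using group_core[OF assms(1,2,3) Psi(1)] Psi(2) by blast
  show ?thesis
    using cases
  proof
    assume B: "real_mat B = P ** real_mat A ** Q"
    obtain Pc D :: "complex^'n^'n" where Pc: "invertible Pc" and D: "\<forall>i j. i \<noteq> j \<longrightarrow> D $ i $ j = 0"
      and cA: "complex_mat A = Pc ** D ** matrix_inv Pc"
      using assms(6) unfolding diagonalizable_over_C_def by blast
    have PP: "Pc ** matrix_inv Pc = mat 1" "matrix_inv Pc ** Pc = mat 1"
      using someI_ex[OF Pc[unfolded invertible_def]] unfolding matrix_inv_def by auto
    show ?thesis
      by (rule diag_transfer[OF PQ B _ PP D]) (simp add: cA complex_mat_cm[symmetric])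
  next
    assume B: "real_mat B = P ** Ainv A ** Q"
    show ?thesis by (rule diag_transfer'[OF PQ B diag_Ainv[OF assms(1,6)]])
  qed
qed

end
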